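(* Let $\mu$ be a finite positive Borel measure on $\mathbb{D}$ and $\Psi_1,\Psi_2$ Orlicz functions. Suppose that for some constant $A>0$ there is $0<h_A\le1/2$ such that $$K_{\mu,2}(h)\le\frac{1/h^2}{\Psi_2\big[A\,\Psi_1^{-1}(1/h^2)\big]}\quad\text{for }0<h<h_A.$$ Then for every $f\in\mathfrak{B}^{\Psi_1}$ with $\|f\|_{\mathfrak{B}^{\Psi_1}}\le1$ and every Borel set $E\subseteq\mathbb{D}$, with $x_A=(A/8)\,\Psi_1^{-1}(4/h_A^2)$, $$\int_E\Psi_2(A|f|/64)\,d\mu\le\mu(E)\,\Psi_2(x_A)+\frac18\int_{\mathbb{D}}\Psi_1(\Lambda_f)\,d\mathcal{A}.$$
   Context: $\mathbb{D}$ is the open unit disk, $\mathbb{T}$ the unit circle, $\mathcal{A}$ the normalized area measure $dx\,dy/\pi$. An Orlicz function is a nonnegative increasing convex $\Psi\colon[0,\infty)\to[0,\infty)$ with $\Psi(0)=0$, $\Psi(x)>0$ for $x>0$, $\Psi(\infty)=\infty$. $\mathfrak{B}^{\Psi}$ is the space of analytic $f$ on $\mathbb{D}$ with Luxemburg norm $\inf\{C>0:\int_{\mathbb{D}}\Psi(|f|/C)\,d\mathcal{A}\le1\}$ finite. For $\xi\in\mathbb{T}$, $0<h\le1$: $W(\xi,h)=\{z\in\mathbb{D}:|z|\ge1-h,\ |\arg(z\bar\xi)|\le\pi h\}$, $\rho_\mu(h)=\sup_{\xi}\mu(W(\xi,h))$, $K_{\mu,2}(h)=\sup_{0<t<h}\rho_\mu(t)/t^2$.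 Hastings–Luecking sets: for $k=2^n+j-1$, $n\ge0$, $0\le j\le2^n-1$, $\Delta_k=\{z\in\mathbb{D}:1-2^{-n}\le|z|<1-2^{-n-1},\ (2j-1)\pi/2^n\le\arg z<(2j+1)\pi/2^n\}$; $\Lambda_f=\sum_{k\ge0}(\sup_{\Delta_k}|f|)\mathbf{1}_{\Delta_k}$. *)

theory Defs
  imports "HOL-Analysis.Analysis"
begin

text \<open>Orlicz function: nonnegative, increasing, convex on [0,oo), vanishing only at 0,
  tending to infinity. Only its values on [0,oo) matter.\<close>
definition orlicz :: "(real \<Rightarrow> real) \<Rightarrow> bool" where
  "orlicz \<Psi> \<longleftrightarrow> (\<forall>x\<ge>0. \<Psi> x \<ge> 0) \<and> mono_on {0..} \<Psi> \<and> convex_on {0..} \<Psi> \<and>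
     \<Psi> 0 = 0 \<and> (\<forall>x>0. \<Psi> x > 0) \<and> filterlim \<Psi> at_top at_top"

text \<open>Inverse of an Orlicz function (a bijection of [0,oo) onto itself).\<close>
definition orlicz_inv :: "(real \<Rightarrow> real) \<Rightarrow> real \<Rightarrow> real" where
  "orlicz_inv \<Psi> y = (THE x. x \<ge> 0 \<and> \<Psi> x = y)"

definition unit_disc :: "complex set" where
  "unit_disc = ball 0 1"

definition area_D :: "complex measure" where
  "area_D = density (restrict_space lborel unit_disc) (\<lambda>_. ennreal (1 / pi))"

definition orlicz_modular :: "(real \<Rightarrow> real) \<Rightarrow> (complex \<Rightarrow> complex) \<Rightarrow> real \<Rightarrow> ennreal" where
  "orlicz_modular \<Psi> f C = (\<integral>\<^sup>+ z. ennreal (\<Psi> (norm (f z) / C)) \<partial>area_D)"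

definition bergman_orlicz :: "(real \<Rightarrow> real) \<Rightarrow> (complex \<Rightarrow> complex) set" where
  "bergman_orlicz \<Psi> = {f. f holomorphic_on unit_disc \<and> (\<exists>C>0. orlicz_modular \<Psi> f C \<le> 1)}"

definition lux_norm :: "(real \<Rightarrow> real) \<Rightarrow> (complex \<Rightarrow> complex) \<Rightarrow> real" where
  "lux_norm \<Psi> f = Inf {C. C > 0 \<and> orlicz_modular \<Psi> f C \<le> 1}"

definition carleson_window :: "complex \<Rightarrow> real \<Rightarrow> complex set" where
  "carleson_window \<xi> h = {z. norm z < 1 \<and> norm z \<ge> 1 - h \<and> \<bar>Arg (z * cnj \<xi>)\<bar> \<le> pi * h}"

definition rho_mu :: "complex measure \<Rightarrow> real \<Rightarrow> real" where
  "rho_mu \<mu> h = (SUP \<xi>\<in>sphere 0 1. measure \<mu> (carleson_window \<xi> h))"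

definition K_mu2 :: "complex measure \<Rightarrow> real \<Rightarrow> ereal" where
  "K_mu2 \<mu> h = (SUP t\<in>{0<..<h}. ereal (rho_mu \<mu> t / t\<^sup>2))"

definition HL_box :: "nat \<Rightarrow> nat \<Rightarrow> complex set" where
  "HL_box n j = {z. 1 - 1 / 2 ^ n \<le> norm z \<and> norm z < 1 - 1 / 2 ^ (n + 1) \<and>
      (\<exists>m::int. (2 * real j - 1) * pi / 2 ^ n \<le> Arg z + 2 * pi * m \<and>
                Arg z + 2 * pi * m < (2 * real j + 1) * pi / 2 ^ n)}"

definition HL_set :: "nat \<Rightarrow> complex set" where
  "HL_set k = \<Union>{HL_box n j | n j. j \<le> 2 ^ n - 1 \<and> k = 2 ^ n + j - 1}"

definition Lambda_f :: "(complex \<Rightarrow> complex) \<Rightarrow> complex \<Rightarrow> real" where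
  "Lambda_f f z = (\<Sum>k. (SUP w\<in>HL_set k. norm (f w)) * indicator (HL_set k) z)"

end

theory Submission
  imports Defs "HOL-Complex_Analysis.Complex_Analysis" "HOL-Probability.Probability"
begin


lemma borel_measurable_Complex[measurable]:
  assumes [measurable]: "f \<in> borel_measurable M" "g \<in> borel_measurable M"
  shows "(\<lambda>x. Complex (f x) (g x)) \<in> borel_measurable M"
proof -
  have "(\<lambda>x. Complex (f x) (g x)) = (\<lambda>x. complex_of_real (f x) + \<i> * complex_of_real (g x))"
    by (auto simp: complex_eq_iff)
  then show ?thesis by simp
qed

lemma lborel_complex_distr:
  "distr (lborel \<Otimes>\<^sub>M lborel) borel (\<lambda>p. Complex (fst p) (snd p)) = (lborel :: complex measure)"
proof (rule lborel_eqI[symmetric])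
  fix l u :: complex
  assume le: "\<And>b. b \<in> Basis \<Longrightarrow> l \<bullet> b \<le> u \<bullet> b"
  have le1: "Re l \<le> Re u" "Im l \<le> Im u" using le[of 1] le[of \<i>] by (auto simp: inner_complex_def Basis_complex_def)
  have pre: "(\<lambda>p. Complex (fst p) (snd p)) -` box l u \<inter> space (lborel \<Otimes>\<^sub>M lborel) = {Re l<..<Re u} \<times> {Im l<..<Im u}"
    by (auto simp: box_def Basis_complex_def inner_complex_def space_pair_measure)
  have "emeasure (distr (lborel \<Otimes>\<^sub>M lborel) borel (\<lambda>p. Complex (fst p) (snd p))) (box l u)
      = emeasure (lborel \<Otimes>\<^sub>M lborel) ({Re l<..<Re u} \<times> {Im l<..<Im u})"
    by (subst emeasure_distr) (auto simp: pre)
  also have "\<dots> = ennreal ((Re u - Re l) * (Im u - Im l))"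
    using le1 by (simp add: lborel.emeasure_pair_measure_Times ennreal_mult)
  also have "(Re u - Re l) * (Im u - Im l) = prod ((\<bullet>) (u - l)) Basis"
    by (simp add: Basis_complex_def inner_complex_def)
  finally show "emeasure (distr (lborel \<Otimes>\<^sub>M lborel) borel (\<lambda>p. Complex (fst p) (snd p))) (box l u) = ennreal (prod ((\<bullet>) (u - l)) Basis)" .
qed simp

lemma nn_integral_lborel_complex:
  assumes [measurable]: "h \<in> borel_measurable borel"
  shows "(\<integral>\<^sup>+z. h z \<partial>(lborel::complex measure)) = (\<integral>\<^sup>+x. \<integral>\<^sup>+y. h (Complex x y) \<partial>lborel \<partial>lborel)"
proof -
  have "(\<integral>\<^sup>+z. h z \<partial>(lborel::complex measure)) = integral\<^sup>N (distr (lborel \<Otimes>\<^sub>M lborel) borel (\<lambda>p. Complex (fst p) (snd p))) h"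
    by (simp add: lborel_complex_distr)
  also have "\<dots> = (\<integral>\<^sup>+p. h (Complex (fst p) (snd p)) \<partial>(lborel \<Otimes>\<^sub>M lborel))"
    by (rule nn_integral_distr) auto
  also have "\<dots> = (\<integral>\<^sup>+x. \<integral>\<^sup>+y. h (Complex x y) \<partial>lborel \<partial>lborel)"
    using lborel.nn_integral_fst[of "\<lambda>p. h (Complex (fst p) (snd p))"] by simp
  finally show ?thesis .
qed

lemma nn_integral_lborel_shift:
  fixes g :: "'a::euclidean_space \<Rightarrow> ennreal"
  assumes [measurable]: "g \<in> borel_measurable borel"
  shows "(\<integral>\<^sup>+x. g (a + x) \<partial>lborel) = (\<integral>\<^sup>+x. g x \<partial>lborel)"
proof -
  have "(\<integral>\<^sup>+x. g x \<partial>lborel) = integral\<^sup>N (distr lborel borel ((+) a)) g"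
    by (simp add: lborel_distr_plus)
  also have "\<dots> = (\<integral>\<^sup>+x. g (a + x) \<partial>lborel)"
    by (rule nn_integral_distr) auto
  finally show ?thesis by simp
qed

lemma nn_integral_shearX:
  fixes h :: "complex \<Rightarrow> ennreal"
  assumes [measurable]: "h \<in> borel_measurable borel"
  shows "(\<integral>\<^sup>+z. h (Complex (Re z + c * Im z) (Im z)) \<partial>lborel) = (\<integral>\<^sup>+z. h z \<partial>lborel)"
proof -
  have "(\<integral>\<^sup>+z. h (Complex (Re z + c * Im z) (Im z)) \<partial>lborel)
      = (\<integral>\<^sup>+x. \<integral>\<^sup>+y. h (Complex (x + c * y) y) \<partial>lborel \<partial>lborel)"
    by (subst nn_integral_lborel_complex) auto
  also have "\<dots> = (\<integral>\<^sup>+y. \<integral>\<^sup>+x. h (Complex (x + c * y) y) \<partial>lborel \<partial>lborel)"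
    by (rule lborel_pair.Fubini'[symmetric]) simp
  also have "\<dots> = (\<integral>\<^sup>+y. \<integral>\<^sup>+x. h (Complex x y) \<partial>lborel \<partial>lborel)"
  proof (rule nn_integral_cong)
    fix y :: real
    show "(\<integral>\<^sup>+x. h (Complex (x + c * y) y) \<partial>lborel) = (\<integral>\<^sup>+x. h (Complex x y) \<partial>lborel)"
      using nn_integral_lborel_shift[of "\<lambda>x. h (Complex x y)" "c * y"]
      by (simp add: add.commute)
  qed
  also have "\<dots> = (\<integral>\<^sup>+x. \<integral>\<^sup>+y. h (Complex x y) \<partial>lborel \<partial>lborel)"
    by (rule lborel_pair.Fubini') simp
  also have "\<dots> = (\<integral>\<^sup>+z. h z \<partial>lborel)"
    by (subst nn_integral_lborel_complex) auto
  finally show ?thesis .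
qed

lemma nn_integral_shearY:
  fixes h :: "complex \<Rightarrow> ennreal"
  assumes [measurable]: "h \<in> borel_measurable borel"
  shows "(\<integral>\<^sup>+z. h (Complex (Re z) (Im z + b * Re z)) \<partial>lborel) = (\<integral>\<^sup>+z. h z \<partial>lborel)"
proof -
  have "(\<integral>\<^sup>+z. h (Complex (Re z) (Im z + b * Re z)) \<partial>lborel)
      = (\<integral>\<^sup>+x. \<integral>\<^sup>+y. h (Complex x (y + b * x)) \<partial>lborel \<partial>lborel)"
    by (subst nn_integral_lborel_complex) auto
  also have "\<dots> = (\<integral>\<^sup>+x. \<integral>\<^sup>+y. h (Complex x y) \<partial>lborel \<partial>lborel)"
  proof (rule nn_integral_cong)
    fix x :: real
    show "(\<integral>\<^sup>+y. h (Complex x (y + b * x)) \<partial>lborel) = (\<integral>\<^sup>+y. h (Complex x y) \<partial>lborel)"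
      using nn_integral_lborel_shift[of "\<lambda>y. h (Complex x y)" "b * x"]
      by (simp add: add.commute)
  qed
  also have "\<dots> = (\<integral>\<^sup>+z. h z \<partial>lborel)"
    by (subst nn_integral_lborel_complex) auto
  finally show ?thesis .
qed

lemma nn_integral_rotate_aux:
  fixes h :: "complex \<Rightarrow> ennreal" and \<omega> :: complex
  assumes [measurable]: "h \<in> borel_measurable borel" and w: "norm \<omega> = 1" "\<omega> \<noteq> -1"
  shows "(\<integral>\<^sup>+z. h (\<omega> * z) \<partial>lborel) = (\<integral>\<^sup>+z. h z \<partial>lborel)"
proof -
  define a where "a = Re \<omega>"
  define b where "b = Im \<omega>"
  have ab: "a\<^sup>2 + b\<^sup>2 = 1" using w(1) unfolding a_def b_def cmod_def by simp
  have a1: "1 + a \<noteq> 0"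
  proof
    assume "1 + a = 0"
    then have "a = -1" by simp
    with ab have "b = 0" by simp
    with \<open>a = -1\<close> have "\<omega> = -1" unfolding a_def b_def by (simp add: complex_eq_iff)
    with w(2) show False by simp
  qed
  define c where "c = - b / (1 + a)"
  define X where "X = (\<lambda>z. Complex (Re z + c * Im z) (Im z))"
  define Y where "Y = (\<lambda>z. Complex (Re z) (Im z + b * Re z))"
  have bc: "b * c = a - 1"
  proof -
    have "b * c = - (b\<^sup>2) / (1 + a)" by (simp add: c_def power2_eq_square)
    also have "b\<^sup>2 = (1 - a) * (1 + a)" using ab by (simp add: algebra_simps power2_eq_square)
    finally show ?thesis using a1 by simp
  qed
  have c2: "c * (2 + b * c) = - b"
  proof -
    have "c * (2 + b * c) = c * (1 + a)" using bc by simp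
    also have "\<dots> = - b" using a1 by (simp add: c_def)
    finally show ?thesis .
  qed
  have eq: "\<omega> * z = X (Y (X z))" for z
  proof -
    have "Re (X (Y (X z))) = Re z * (1 + b * c) + Im z * (c * (2 + b * c))"
      by (simp add: X_def Y_def algebra_simps)
    also have "\<dots> = Re z * a - Im z * b" using c2 bc a1 by (simp add: c_def)
    finally have 1: "Re (X (Y (X z))) = Re z * a - Im z * b" .
    have "Im (X (Y (X z))) = b * Re z + Im z * (1 + b * c)"
      by (simp add: X_def Y_def algebra_simps)
    also have "\<dots> = b * Re z + Im z * a" unfolding bc by simp
    finally have 2: "Im (X (Y (X z))) = b * Re z + Im z * a" .
    show ?thesis using 1 2 by (simp add: complex_eq_iff a_def b_def algebra_simps)
  qed
  have mX[measurable]: "X \<in> borel_measurable borel" unfolding X_def by measurable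
  have mY[measurable]: "Y \<in> borel_measurable borel" unfolding Y_def by measurable
  have Xz: "Complex (Re z + c * Im z) (Im z) = X z" for z by (simp add: X_def)
  have Yz: "Complex (Re z) (Im z + b * Re z) = Y z" for z by (simp add: Y_def)
  have m1: "(\<lambda>z. h (X (Y z))) \<in> borel_measurable borel" by measurable
  have m2: "(\<lambda>z. h (X z)) \<in> borel_measurable borel" by measurable
  have "(\<integral>\<^sup>+z. h (\<omega> * z) \<partial>lborel) = (\<integral>\<^sup>+z. h (X (Y (X z))) \<partial>lborel)"
    by (simp add: eq)
  also have "\<dots> = (\<integral>\<^sup>+z. h (X (Y z)) \<partial>lborel)"
    using nn_integral_shearX[OF m1, of c] by (simp only: Xz)
  also have "\<dots> = (\<integral>\<^sup>+z. h (X z) \<partial>lborel)"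
    using nn_integral_shearY[OF m2, of b] by (simp only: Yz)
  also have "\<dots> = (\<integral>\<^sup>+z. h z \<partial>lborel)"
    using nn_integral_shearX[OF assms(1), of c] by (simp only: Xz)
  finally show ?thesis .
qed

lemma nn_integral_rotate:
  fixes h :: "complex \<Rightarrow> ennreal" and \<omega> :: complex
  assumes [measurable]: "h \<in> borel_measurable borel" and w: "norm \<omega> = 1"
  shows "(\<integral>\<^sup>+z. h (\<omega> * z) \<partial>lborel) = (\<integral>\<^sup>+z. h z \<partial>lborel)"
proof (cases "\<omega> = -1")
  case True
  have i: "norm \<i> = 1" "\<i> \<noteq> -1" by (auto simp: complex_eq_iff)
  have "(\<integral>\<^sup>+z. h (\<omega> * z) \<partial>lborel) = (\<integral>\<^sup>+z. (\<lambda>u. h (\<i> * u)) (\<i> * z) \<partial>lborel)"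
    by (simp add: True)
  also have "\<dots> = (\<integral>\<^sup>+z. h (\<i> * z) \<partial>lborel)"
    by (rule nn_integral_rotate_aux[OF _ i]) measurable
  also have "\<dots> = (\<integral>\<^sup>+z. h z \<partial>lborel)"
    by (rule nn_integral_rotate_aux[OF _ i]) measurable
  finally show ?thesis .
next
  case False
  then show ?thesis using nn_integral_rotate_aux[OF assms(1) w] by simp
qed



lemma orlicz_D:
  assumes "orlicz \<Psi>"
  shows "\<forall>x\<ge>0. \<Psi> x \<ge> 0" "mono_on {0..} \<Psi>" "convex_on {0..} \<Psi>" "\<Psi> 0 = 0"
    "\<forall>x>0. \<Psi> x > 0" "filterlim \<Psi> at_top at_top"
  using assms unfolding orlicz_def by blast+

lemma orlicz_nonneg: "orlicz \<Psi> \<Longrightarrow> 0 \<le> x \<Longrightarrow> 0 \<le> \<Psi> x"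
  using orlicz_D(1) by blast

lemma orlicz_0: "orlicz \<Psi> \<Longrightarrow> \<Psi> 0 = 0"
  using orlicz_D(4) by blast

lemma orlicz_pos: "orlicz \<Psi> \<Longrightarrow> 0 < x \<Longrightarrow> 0 < \<Psi> x"
  using orlicz_D(5) by blast

lemma orlicz_mono: "orlicz \<Psi> \<Longrightarrow> 0 \<le> x \<Longrightarrow> x \<le> y \<Longrightarrow> \<Psi> x \<le> \<Psi> y"
  using orlicz_D(2)[unfolded mono_on_def] by (metis atLeast_iff order_trans)

lemma orlicz_convex: "orlicz \<Psi> \<Longrightarrow> convex_on {0..} \<Psi>"
  using orlicz_D(3) by blast

lemma orlicz_scale:
  assumes "orlicz \<Psi>" "0 \<le> c" "c \<le> 1" "0 \<le> x"
  shows "\<Psi> (c * x) \<le> c * \<Psi> x"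
proof -
  have "\<Psi> ((1 - c) *\<^sub>R 0 + c *\<^sub>R x) \<le> (1 - c) * \<Psi> 0 + c * \<Psi> x"
    using convex_onD[OF orlicz_convex[OF assms(1)], of c 0 x] assms by auto
  then show ?thesis using orlicz_0[OF assms(1)] by simp
qed

lemma orlicz_strict:
  assumes "orlicz \<Psi>" "0 \<le> x" "x < y"
  shows "\<Psi> x < \<Psi> y"
proof (cases "x = 0")
  case True
  then show ?thesis using assms orlicz_pos orlicz_0 by fastforce
next
  case False
  then have "0 < x" using assms by simp
  have "\<Psi> ((x / y) * y) \<le> (x / y) * \<Psi> y"
    using assms by (intro orlicz_scale) auto
  moreover have "(x / y) * \<Psi> y < \<Psi> y"
    using assms \<open>0 < x\<close> orlicz_pos[OF assms(1), of y] by (simp add: field_simps)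
  ultimately show ?thesis using assms by simp
qed

lemma orlicz_le_iff: "orlicz \<Psi> \<Longrightarrow> 0 \<le> x \<Longrightarrow> 0 \<le> y \<Longrightarrow> \<Psi> x \<le> \<Psi> y \<longleftrightarrow> x \<le> y"
  using orlicz_mono[of \<Psi> x y] orlicz_strict[of \<Psi> y x] by (cases "x \<le> y") auto

lemma orlicz_continuous:
  assumes "orlicz \<Psi>"
  shows "continuous_on {0..} \<Psi>"
proof -
  have c1: "continuous_on {0<..} \<Psi>"
    by (rule convex_on_continuous) (auto intro: convex_on_subset[OF orlicz_convex[OF assms]])
  show ?thesis
    unfolding continuous_on_eq_continuous_within
  proof
    fix x :: real assume x: "x \<in> {0..}"
    show "continuous (at x within {0..}) \<Psi>"
    proof (cases "x = 0")
      case False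
      then have "x \<in> {0<..}" using x by auto
      then have "continuous (at x) \<Psi>"
        using c1 by (simp add: continuous_on_eq_continuous_at)
      then show ?thesis by (rule continuous_at_imp_continuous_within)
    next
      case True
      show ?thesis unfolding True continuous_within_eps_delta
      proof (intro allI impI)
        fix e :: real assume e: "0 < e"
        define d where "d = min 1 (e / (\<Psi> 1 + 1))"
        have p1: "0 \<le> \<Psi> 1" using orlicz_nonneg[OF assms] by simp
        have d: "0 < d" using e p1 by (simp add: d_def)
        have "\<forall>x'\<in>{0..}. dist x' 0 < d \<longrightarrow> dist (\<Psi> x') (\<Psi> 0) < e"
        proof (intro ballI impI)
          fix y :: real assume y: "y \<in> {0..}" "dist y 0 < d"
          then have y1: "0 \<le> y" "y < d" by auto
          have "\<Psi> (y * 1) \<le> y * \<Psi> 1"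
            using y1 by (intro orlicz_scale[OF assms]) (auto simp: d_def)
          also have "\<dots> \<le> d * \<Psi> 1" using y1 p1 by (intro mult_right_mono) auto
          also have "\<dots> \<le> e / (\<Psi> 1 + 1) * \<Psi> 1" using p1 by (intro mult_right_mono) (auto simp: d_def)
          also have "\<dots> < e" using e p1 by (simp add: field_simps)
          finally show "dist (\<Psi> y) (\<Psi> 0) < e"
            using orlicz_0[OF assms] orlicz_nonneg[OF assms y1(1)] by (simp add: dist_real_def)
        qed
        with d show "\<exists>d>0. \<forall>x'\<in>{0..}. dist x' 0 < d \<longrightarrow> dist (\<Psi> x') (\<Psi> 0) < e" by blast
      qed
    qed
  qed
qed

lemma orlicz_inv:
  assumes "orlicz \<Psi>" "0 \<le> y"
  shows "0 \<le> orlicz_inv \<Psi> y" "\<Psi> (orlicz_inv \<Psi> y) = y"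
proof -
  have "filterlim \<Psi> at_top at_top" using orlicz_D(6)[OF assms(1)] .
  then have "eventually (\<lambda>x. y \<le> \<Psi> x) at_top" by (simp add: filterlim_at_top)
  then obtain b0 where b0: "\<And>x. x \<ge> b0 \<Longrightarrow> y \<le> \<Psi> x" by (auto simp: eventually_at_top_linorder)
  define b where "b = max b0 0"
  have "y \<le> \<Psi> b" "0 \<le> b" using b0 by (auto simp: b_def)
  moreover have "continuous_on {0..b} \<Psi>"
    by (rule continuous_on_subset[OF orlicz_continuous[OF assms(1)]]) auto
  ultimately have "\<exists>x. 0 \<le> x \<and> x \<le> b \<and> \<Psi> x = y"
    using IVT'[of \<Psi> 0 y b] orlicz_0[OF assms(1)] assms(2) by simp
  then obtain x where x: "0 \<le> x" "\<Psi> x = y" by blast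
  have uniq: "x' = x" if "0 \<le> x' \<and> \<Psi> x' = y" for x'
  proof -
    have "x' \<le> x" using orlicz_le_iff[OF assms(1), of x' x] that x by simp
    moreover have "x \<le> x'" using orlicz_le_iff[OF assms(1), of x x'] that x by simp
    ultimately show ?thesis by simp
  qed
  have "orlicz_inv \<Psi> y = x"
    unfolding orlicz_inv_def
  proof (rule the_equality)
    show "0 \<le> x \<and> \<Psi> x = y" using x by simp
  qed (rule uniq)
  then show "0 \<le> orlicz_inv \<Psi> y" "\<Psi> (orlicz_inv \<Psi> y) = y" using x by auto
qed

lemma orlicz_le_inv_iff:
  assumes "orlicz \<Psi>" "0 \<le> x" "0 \<le> y"
  shows "\<Psi> x \<le> y \<longleftrightarrow> x \<le> orlicz_inv \<Psi> y"
  using orlicz_le_iff[OF assms(1) assms(2) orlicz_inv(1)[OF assms(1,3)]] orlicz_inv(2)[OF assms(1,3)]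
  by simp

lemma orlicz_inv_Psi:
  assumes "orlicz \<Psi>" "0 \<le> x"
  shows "orlicz_inv \<Psi> (\<Psi> x) = x"
proof -
  have y: "0 \<le> \<Psi> x" using orlicz_nonneg assms by blast
  show ?thesis
    using orlicz_le_iff[OF assms(1) assms(2) orlicz_inv(1)[OF assms(1) y]]
      orlicz_le_iff[OF assms(1) orlicz_inv(1)[OF assms(1) y] assms(2)] orlicz_inv(2)[OF assms(1) y]
    by auto
qed

lemma orlicz_convex_ext:
  assumes "orlicz \<Psi>"
  shows "convex_on UNIV (\<lambda>x. \<Psi> (max x 0))"
proof (rule convex_onI)
  fix t x y :: real assume t: "0 < t" "t < 1"
  have "max ((1 - t) *\<^sub>R x + t *\<^sub>R y) 0 \<le> (1 - t) *\<^sub>R max x 0 + t *\<^sub>R max y 0"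
  proof -
    have a: "(1-t)*x \<le> (1-t)*max x 0" by (rule mult_left_mono) (use t in auto)
    have b: "t*y \<le> t*max y 0" by (rule mult_left_mono) (use t in auto)
    have c: "0 \<le> (1-t)*max x 0 + t*max y 0" using t by simp
    show ?thesis using a b c by simp
  qed
  then have "\<Psi> (max ((1 - t) *\<^sub>R x + t *\<^sub>R y) 0) \<le> \<Psi> ((1 - t) *\<^sub>R max x 0 + t *\<^sub>R max y 0)"
    by (intro orlicz_mono[OF assms]) auto
  also have "\<dots> \<le> (1 - t) * \<Psi> (max x 0) + t * \<Psi> (max y 0)"
    using t by (intro convex_onD[OF orlicz_convex[OF assms]]) auto
  finally show "\<Psi> (max ((1 - t) *\<^sub>R x + t *\<^sub>R y) 0) \<le> (1 - t) * \<Psi> (max x 0) + t * \<Psi> (max y 0)" .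
qed simp



definition eC :: "real \<Rightarrow> complex" where
  "eC t = exp (2 * of_real pi * \<i> * of_real t)"

lemma norm_eC[simp]: "norm (eC t) = 1"
  unfolding eC_def by (simp add: norm_exp_eq_Re)

lemma continuous_on_eC[continuous_intros]: "continuous_on S eC"
  unfolding eC_def by (intro continuous_intros)

lemma borel_measurable_eC[measurable]: "eC \<in> borel_measurable borel"
  by (intro borel_measurable_continuous_onI continuous_on_eC)

lemma circle_mean:
  fixes g :: "complex \<Rightarrow> complex"
  assumes holo: "g holomorphic_on S" and S: "open S" "cball w (norm v) \<subseteq> S"
  shows "((\<lambda>t. g (w + eC t * v)) has_integral g w) {0..1}"
proof (cases "v = 0")
  case True
  then show ?thesis using has_integral_const_real[of "g w" 0 1] by simp
next
  case False
  define \<rho> where "\<rho> = norm v"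
  have \<rho>: "0 < \<rho>" using False by (simp add: \<rho>_def)
  define \<omega> where "\<omega> = v / of_real \<rho>"
  have \<omega>: "norm \<omega> = 1" using \<rho> by (simp add: \<omega>_def norm_divide \<rho>_def)
  have \<omega>\<rho>: "\<omega> * of_real \<rho> = v" using \<rho> by (simp add: \<omega>_def)
  define A where "A = (\<lambda>u. w + \<omega> * (u - w))"
  define G where "G = g \<circ> A"
  have Ain: "A ` cball w \<rho> \<subseteq> cball w \<rho>"
    by (auto simp: A_def dist_norm norm_mult \<omega> norm_minus_commute)
  have cS: "cball w \<rho> \<subseteq> S" using S by (simp add: \<rho>_def)
  have contg: "continuous_on S g" using holo by (rule holomorphic_on_imp_continuous_on)
  have contG: "continuous_on (cball w \<rho>) G"
    unfolding G_def
  proof (rule continuous_on_compose)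
    show "continuous_on (cball w \<rho>) A" unfolding A_def by (intro continuous_intros)
    show "continuous_on (A ` cball w \<rho>) g"
      by (rule continuous_on_subset[OF contg]) (use Ain cS in auto)
  qed
  have holG: "G holomorphic_on ball w \<rho>"
    unfolding G_def
  proof (rule holomorphic_on_compose_gen[OF _ holo])
    show "A holomorphic_on ball w \<rho>" unfolding A_def by (intro holomorphic_intros)
    show "A ` ball w \<rho> \<subseteq> S" using Ain cS ball_subset_cball[of w \<rho>] by blast
  qed
  have "((\<lambda>u. G u / (u - w)) has_contour_integral (2 * of_real pi * \<i> * G w)) (circlepath w \<rho>)"
    by (rule Cauchy_integral_circlepath[OF contG holG]) (simp add: \<rho>)
  then have hi: "((\<lambda>t. G (circlepath w \<rho> t) / (circlepath w \<rho> t - w) * vector_derivative (circlepath w \<rho>) (at t within {0..1}))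
      has_integral (2 * of_real pi * \<i> * G w)) {0..1}"
    by (simp add: has_contour_integral_def)
  have "((\<lambda>t. (2 * of_real pi * \<i>) * g (w + eC t * v)) has_integral (2 * of_real pi * \<i> * G w)) {0..1}"
  proof (rule has_integral_eq[OF _ hi])
    fix t :: real assume t: "t \<in> {0..1}"
    have e0: "eC t \<noteq> 0" unfolding eC_def by simp
    have cp: "circlepath w \<rho> t = w + of_real \<rho> * eC t" by (simp add: circlepath eC_def)
    have vd: "vector_derivative (circlepath w \<rho>) (at t within {0..1}) = 2 * of_real pi * \<i> * of_real \<rho> * eC t"
      using t by (simp add: vector_derivative_circlepath01 eC_def)
    have GA: "G (circlepath w \<rho> t) = g (w + eC t * v)"
      unfolding G_def A_def cp comp_def using \<omega>\<rho>[symmetric] by (simp add: algebra_simps)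
    show "G (circlepath w \<rho> t) / (circlepath w \<rho> t - w) * vector_derivative (circlepath w \<rho>) (at t within {0..1})
        = (2 * of_real pi * \<i>) * g (w + eC t * v)"
    proof -
      have d: "circlepath w \<rho> t - w = of_real \<rho> * eC t" by (simp add: cp)
      have "G (circlepath w \<rho> t) / (circlepath w \<rho> t - w) * vector_derivative (circlepath w \<rho>) (at t within {0..1})
          = (2 * of_real pi * \<i>) * G (circlepath w \<rho> t)"
        unfolding d vd using e0 \<rho> by (simp add: field_simps)
      then show ?thesis unfolding GA .
    qed
  qed
  then have "((\<lambda>t. inverse (2 * of_real pi * \<i>) * ((2 * of_real pi * \<i>) * g (w + eC t * v))) has_integral
      inverse (2 * of_real pi * \<i>) * (2 * of_real pi * \<i> * G w)) {0..1}"
    by (rule has_integral_mult_right)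
  moreover have "G w = g w" by (simp add: G_def A_def)
  ultimately show ?thesis by (simp add: field_simps)
qed



lemma jensen_circle:
  fixes g :: "complex \<Rightarrow> complex"
  assumes orl: "orlicz \<Psi>" and holo: "g holomorphic_on S" and S: "open S" "cball w (norm v) \<subseteq> S"
  shows "ennreal (\<Psi> (norm (g w))) \<le> (\<integral>\<^sup>+t. ennreal (\<Psi> (norm (g (w + eC t * v)))) * indicator {0..1} t \<partial>lborel)"
proof -
  define \<phi> where "\<phi> = (\<lambda>t. g (w + eC t * v))"
  have contg: "continuous_on S g" using holo by (rule holomorphic_on_imp_continuous_on)
  have inS: "w + eC t * v \<in> S" for t
    using S(2) by (auto simp: dist_norm norm_mult)
  have cont\<phi>: "continuous_on {0..1} \<phi>"
    unfolding \<phi>_def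
    by (rule continuous_on_compose2[OF contg]) (auto intro!: continuous_intros inS)
  define X where "X = (\<lambda>t. norm (\<phi> t))"
  have contX: "continuous_on {0..1} X" unfolding X_def by (intro continuous_intros cont\<phi>)
  have X0: "0 \<le> X t" for t by (simp add: X_def)
  have contPX: "continuous_on {0..1} (\<lambda>t. \<Psi> (X t))"
    by (rule continuous_on_compose2[OF orlicz_continuous[OF orl] contX]) (auto simp: X0)
  have hi: "(\<phi> has_integral g w) {0..1}" unfolding \<phi>_def by (rule circle_mean[OF holo S])
  have n1: "norm (g w) \<le> integral {0..1} X"
  proof -
    have "norm (integral {0..1} \<phi>) \<le> integral {0..1} X"
      by (rule integral_norm_bound_integral)
         (auto simp: X_def intro: integrable_continuous_interval cont\<phi> contX[unfolded X_def])
    then show ?thesis using integral_unique[OF hi] by simp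
  qed
  define M where "M = restrict_space lborel {0..1::real}"
  have sM: "{0..1::real} \<inter> space lborel \<in> sets lborel" by simp
  have "prob_space M"
    by (rule prob_spaceI) (simp add: M_def emeasure_restrict_space space_restrict_space)
  then interpret P: prob_space M .
  have intX: "integrable M X"
    unfolding M_def integrable_restrict_space[OF sM]
    by (rule borel_integrable_compact) (auto intro: contX)
  have intPX: "integrable M (\<lambda>t. \<Psi> (X t))"
    unfolding M_def integrable_restrict_space[OF sM]
    by (rule borel_integrable_compact) (auto intro: contPX)
  have eqX: "integral {0..1} X = P.expectation X"
  proof -
    have "P.expectation X = set_lebesgue_integral lborel {0..1} X"
      unfolding M_def integral_restrict_space[OF sM] set_lebesgue_integral_def ..
    also have "\<dots> = integral {0..1} X"
      by (rule set_borel_integral_eq_integral)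
         (unfold set_integrable_def, rule borel_integrable_compact, auto intro: contX)
    finally show ?thesis by simp
  qed
  have J: "(\<lambda>x. \<Psi> (max x 0)) (P.expectation X) \<le> P.expectation (\<lambda>t. (\<lambda>x. \<Psi> (max x 0)) (X t))"
  proof (rule P.jensens_inequality[where I=UNIV])
    show "integrable M X" by (rule intX)
    show "AE x in M. X x \<in> UNIV" by simp
    show "UNIV = {0<..<1} \<or> UNIV = {0<..} \<or> UNIV = {..<1} \<or> (UNIV::real set) = UNIV" by simp
    show "integrable M (\<lambda>t. \<Psi> (max (X t) 0))" using intPX by (simp add: X0 max_absorb1)
    show "convex_on UNIV (\<lambda>x. \<Psi> (max x 0))" by (rule orlicz_convex_ext[OF orl])
  qed
  have E0: "0 \<le> P.expectation X" using X0 by (simp add: integral_nonneg_AE)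
  have "\<Psi> (norm (g w)) \<le> \<Psi> (P.expectation X)"
    using n1 eqX by (intro orlicz_mono[OF orl]) auto
  also have "\<dots> \<le> P.expectation (\<lambda>t. \<Psi> (X t))"
    using J E0 by (simp add: X0 max_absorb1)
  finally have r: "\<Psi> (norm (g w)) \<le> P.expectation (\<lambda>t. \<Psi> (X t))" .
  have "(\<integral>\<^sup>+t. ennreal (\<Psi> (X t)) * indicator {0..1} t \<partial>lborel) = (\<integral>\<^sup>+t. ennreal (\<Psi> (X t)) \<partial>M)"
    unfolding M_def nn_integral_restrict_space[OF sM] ..
  also have "\<dots> = ennreal (P.expectation (\<lambda>t. \<Psi> (X t)))"
    by (rule nn_integral_eq_integral[OF intPX]) (simp add: orlicz_nonneg[OF orl X0])
  finally have "ennreal (\<Psi> (norm (g w))) \<le> (\<integral>\<^sup>+t. ennreal (\<Psi> (X t)) * indicator {0..1} t \<partial>lborel)"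
    using r by (simp add: ennreal_leI)
  then show ?thesis by (simp add: X_def \<phi>_def)
qed



lemma emeasure_ball_complex: "0 \<le> r \<Longrightarrow> emeasure lborel (ball (0::complex) r) = ennreal (pi * r^2)"
  by (simp add: emeasure_ball unit_ball_vol_2)

lemma submean:
  assumes orl: "orlicz \<Psi>" and holo: "f holomorphic_on unit_disc" and r: "0 < r" "norm w + r < 1" and C: "0 < C"
  shows "ennreal (r^2 * \<Psi> (norm (f w) / C)) \<le> orlicz_modular \<Psi> f C"
proof -
  define g where "g = (\<lambda>u. f u / of_real C)"
  have holo_g: "g holomorphic_on unit_disc" unfolding g_def using C by (intro holomorphic_intros holo) simp
  have ng: "norm (g u) = norm (f u) / C" for u using C by (simp add: g_def norm_divide)
  have openD: "open unit_disc" by (simp add: unit_disc_def)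
  have cball_sub: "cball w r \<subseteq> unit_disc"
  proof
    fix u assume "u \<in> cball w r"
    then have "norm (u - w) \<le> r" by (simp add: dist_norm norm_minus_commute)
    moreover have "norm u \<le> norm w + norm (u - w)" using norm_triangle_ineq[of w "u - w"] by simp
    ultimately show "u \<in> unit_disc" using r by (simp add: unit_disc_def)
  qed
  have contg: "continuous_on (cball w r) g"
    using holomorphic_on_imp_continuous_on[OF holo_g] cball_sub by (rule continuous_on_subset)
  have contPg: "continuous_on (cball w r) (\<lambda>u. \<Psi> (norm (g u)))"
    by (rule continuous_on_compose2[OF orlicz_continuous[OF orl]]) (auto intro!: continuous_intros contg)
  define F where "F = (\<lambda>u. indicator (cball w r) u *\<^sub>R \<Psi> (norm (g u)))"
  have Fm[measurable]: "F \<in> borel_measurable borel"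
    unfolding F_def by (rule borel_measurable_continuous_on_indicator) (simp_all add: contPg)
  define Fe where "Fe = (\<lambda>u. ennreal (F u))"
  have Fem[measurable]: "Fe \<in> borel_measurable borel" unfolding Fe_def by measurable
  define PW where "PW = \<Psi> (norm (g w))"
  have PW0: "0 \<le> PW" unfolding PW_def by (rule orlicz_nonneg[OF orl]) simp
  have J: "ennreal PW \<le> (\<integral>\<^sup>+t. Fe (w + eC t * v) * indicator {0..1} t \<partial>lborel)" if v: "v \<in> ball 0 r" for v
  proof -
    have nv: "norm v < r" using v by simp
    have "cball w (norm v) \<subseteq> unit_disc" using nv cball_sub by auto
    from jensen_circle[OF orl holo_g openD this]
    have "ennreal PW \<le> (\<integral>\<^sup>+t. ennreal (\<Psi> (norm (g (w + eC t * v)))) * indicator {0..1} t \<partial>lborel)"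
      by (simp add: PW_def)
    also have "\<dots> = (\<integral>\<^sup>+t. Fe (w + eC t * v) * indicator {0..1} t \<partial>lborel)"
    proof (rule nn_integral_cong)
      fix t :: real
      have "w + eC t * v \<in> cball w r" using nv by (simp add: dist_norm norm_mult)
      then show "ennreal (\<Psi> (norm (g (w + eC t * v)))) * indicator {0..1} t = Fe (w + eC t * v) * indicator {0..1} t"
        by (simp add: Fe_def F_def)
    qed
    finally show ?thesis .
  qed
  have PFi: "pair_sigma_finite (lborel::real measure) (lborel::complex measure)"
    unfolding pair_sigma_finite_def using sigma_finite_lborel[where 'a=real] sigma_finite_lborel[where 'a=complex] by blast
  have "ennreal (pi * r^2) * ennreal PW = (\<integral>\<^sup>+v. ennreal PW * indicator (ball 0 r) v \<partial>(lborel::complex measure))"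
    using r by (simp add: nn_integral_cmult_indicator emeasure_ball_complex mult.commute)
  also have "\<dots> \<le> (\<integral>\<^sup>+v. (\<integral>\<^sup>+t. Fe (w + eC t * v) * indicator {0..1} t \<partial>lborel) * indicator (ball 0 r) v \<partial>lborel)"
    by (intro nn_integral_mono) (auto simp: J split: split_indicator)
  also have "\<dots> \<le> (\<integral>\<^sup>+v. (\<integral>\<^sup>+t. Fe (w + eC t * v) * indicator {0..1} t \<partial>lborel) \<partial>lborel)"
    by (intro nn_integral_mono) (auto split: split_indicator)
  also have "\<dots> = (\<integral>\<^sup>+t. (\<integral>\<^sup>+v. Fe (w + eC t * v) * indicator {0..1} t \<partial>lborel) \<partial>lborel)"
    by (rule pair_sigma_finite.Fubini'[OF PFi]) measurable
  also have "\<dots> = (\<integral>\<^sup>+t. (\<integral>\<^sup>+v. Fe (w + eC t * v) \<partial>lborel) * indicator {0..1} t \<partial>lborel)"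
    by (intro nn_integral_cong nn_integral_multc) measurable
  also have "\<dots> = (\<integral>\<^sup>+t. (\<integral>\<^sup>+u. Fe u \<partial>lborel) * indicator {0..1::real} t \<partial>lborel)"
  proof (rule nn_integral_cong)
    fix t :: real
    have m: "(\<lambda>u. Fe (w + u)) \<in> borel_measurable borel" by measurable
    have "(\<integral>\<^sup>+v. Fe (w + eC t * v) \<partial>lborel) = (\<integral>\<^sup>+v. Fe (w + v) \<partial>lborel)"
      using nn_integral_rotate[OF m, of "eC t"] by simp
    also have "\<dots> = (\<integral>\<^sup>+u. Fe u \<partial>lborel)" by (rule nn_integral_lborel_shift) measurable
    finally show "(\<integral>\<^sup>+v. Fe (w + eC t * v) \<partial>lborel) * indicator {0..1} t = (\<integral>\<^sup>+u. Fe u \<partial>lborel) * indicator {0..1} t"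
      by simp
  qed
  also have "\<dots> = (\<integral>\<^sup>+u. Fe u \<partial>lborel)"
    by (simp add: nn_integral_cmult_indicator)
  finally have A: "ennreal (pi * r^2) * ennreal PW \<le> (\<integral>\<^sup>+u. Fe u \<partial>lborel)" .
  have sD: "unit_disc \<inter> space lborel \<in> sets lborel" by (simp add: unit_disc_def)
  have "(\<integral>\<^sup>+u. Fe u \<partial>area_D) = (\<integral>\<^sup>+u. ennreal (1 / pi) * Fe u \<partial>restrict_space lborel unit_disc)"
  proof -
    have FeR: "Fe \<in> borel_measurable (restrict_space lborel unit_disc)"
      by (rule measurable_restrict_space1) simp
    show ?thesis unfolding area_D_def by (rule nn_integral_density[OF _ FeR]) simp
  qed
  also have "\<dots> = (\<integral>\<^sup>+u. ennreal (1 / pi) * Fe u * indicator unit_disc u \<partial>lborel)"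
    by (rule nn_integral_restrict_space[OF sD])
  also have "\<dots> = (\<integral>\<^sup>+u. ennreal (1 / pi) * Fe u \<partial>lborel)"
    by (intro nn_integral_cong) (use cball_sub in \<open>auto simp: Fe_def F_def split: split_indicator\<close>)
  also have "\<dots> = ennreal (1 / pi) * (\<integral>\<^sup>+u. Fe u \<partial>lborel)"
    by (rule nn_integral_cmult) measurable
  finally have B: "(\<integral>\<^sup>+u. Fe u \<partial>area_D) = ennreal (1 / pi) * (\<integral>\<^sup>+u. Fe u \<partial>lborel)" .
  have Cm: "(\<integral>\<^sup>+u. Fe u \<partial>area_D) \<le> orlicz_modular \<Psi> f C"
    unfolding orlicz_modular_def
  proof (intro nn_integral_mono)
    fix u
    have "F u \<le> \<Psi> (norm (g u))" unfolding F_def using orlicz_nonneg[OF orl, of "norm (g u)"]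
      by (auto split: split_indicator)
    then show "Fe u \<le> ennreal (\<Psi> (norm (f u) / C))" by (simp add: Fe_def ng ennreal_leI)
  qed
  have "ennreal (r^2 * PW) = ennreal (1 / pi) * (ennreal (pi * r^2) * ennreal PW)"
    using PW0 by (simp add: ennreal_mult[symmetric])
  also have "\<dots> \<le> ennreal (1 / pi) * (\<integral>\<^sup>+u. Fe u \<partial>lborel)"
    by (intro mult_left_mono A) simp
  also have "\<dots> \<le> orlicz_modular \<Psi> f C" using B Cm by simp
  finally show ?thesis by (simp add: PW_def ng)
qed



lemma pointwise_bound:
  assumes orl: "orlicz \<Psi>" and f: "f \<in> bergman_orlicz \<Psi>" and lux: "lux_norm \<Psi> f \<le> 1"
    and r: "0 < r" "norm w + r < 1"
  shows "r^2 * \<Psi> (norm (f w)) \<le> 1"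
proof -
  define S where "S = {C. C > 0 \<and> orlicz_modular \<Psi> f C \<le> 1}"
  have holo: "f holomorphic_on unit_disc" using f by (simp add: bergman_orlicz_def)
  have Sne: "S \<noteq> {}" using f by (auto simp: bergman_orlicz_def S_def)
  have infS: "Inf S \<le> 1" using lux by (simp add: lux_norm_def S_def)
  have bnd: "r^2 * \<Psi> (norm (f w) / C) \<le> 1" if C: "1 < C" for C
  proof -
    have "Inf S < C" using infS C by simp
    then obtain C' where C': "C' \<in> S" "C' < C" using cInf_lessD[OF Sne] by blast
    have C'0: "0 < C'" and mC': "orlicz_modular \<Psi> f C' \<le> 1" using C' by (auto simp: S_def)
    have "orlicz_modular \<Psi> f C \<le> orlicz_modular \<Psi> f C'"
      unfolding orlicz_modular_def
    proof (intro nn_integral_mono ennreal_leI)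
      fix z
      have "norm (f z) / C \<le> norm (f z) / C'"
        using C'0 C'(2) by (intro divide_left_mono) auto
      then show "\<Psi> (norm (f z) / C) \<le> \<Psi> (norm (f z) / C')"
        using C C'0 by (intro orlicz_mono[OF orl]) auto
    qed
    with mC' have m1: "orlicz_modular \<Psi> f C \<le> 1" by simp
    have "ennreal (r^2 * \<Psi> (norm (f w) / C)) \<le> 1"
      using order_trans[OF submean[OF orl holo r, of C] m1] C by simp
    then show ?thesis by (simp add: ennreal_le_1)
  qed
  define Cn where "Cn = (\<lambda>n::nat. 1 + inverse (real (Suc n)))"
  have Cn1: "1 < Cn n" for n by (simp add: Cn_def)
  have "Cn \<longlonglongrightarrow> 1 + 0"
    unfolding Cn_def by (intro tendsto_add tendsto_const LIMSEQ_inverse_real_of_nat)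
  then have lim1: "Cn \<longlonglongrightarrow> 1" by simp
  have "(\<lambda>n. norm (f w) / Cn n) \<longlonglongrightarrow> norm (f w) / 1"
    by (intro tendsto_intros lim1) simp
  then have l: "(\<lambda>n. norm (f w) / Cn n) \<longlonglongrightarrow> norm (f w)" by simp
  have lim2: "(\<lambda>n. \<Psi> (norm (f w) / Cn n)) \<longlonglongrightarrow> \<Psi> (norm (f w))"
  proof (rule continuous_on_tendsto_compose[OF orlicz_continuous[OF orl] l])
    show "\<forall>\<^sub>F n in sequentially. norm (f w) / Cn n \<in> {0..}"
      using Cn1 by (intro always_eventually allI) (simp add: less_imp_le[OF less_trans[OF zero_less_one]])
  qed simp_all
  then have "(\<lambda>n. r^2 * \<Psi> (norm (f w) / Cn n)) \<longlonglongrightarrow> r^2 * \<Psi> (norm (f w))"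
    by (intro tendsto_intros)
  then show ?thesis
    by (rule LIMSEQ_le_const2) (use bnd Cn1 in auto)
qed



lemma Arg_measurable[measurable]: "Arg \<in> borel_measurable borel"
proof -
  have "Arg = (\<lambda>z. if z = 0 then 0 else Im (Ln z))"
    using Arg_of_real[of 0] by (auto simp: Arg_eq_Im_Ln fun_eq_iff)
  also have "\<dots> \<in> borel_measurable borel" by measurable
  finally show ?thesis .
qed

lemma window_borel: "carleson_window \<xi> h \<in> sets borel"
proof -
  have "carleson_window \<xi> h = {z \<in> space borel. norm z < 1 \<and> norm z \<ge> 1 - h \<and> \<bar>Arg (z * cnj \<xi>)\<bar> \<le> pi * h}"
    by (simp add: carleson_window_def)
  also have "\<dots> \<in> sets borel" by measurable
  finally show ?thesis .
qed

lemma iexp_add_2pi: "iexp (x + 2 * pi * of_int m) = iexp x"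
proof -
  have "iexp (x + 2 * pi * of_int m) = exp (\<i> * of_real x + \<i> * (complex_of_int m * (complex_of_real pi * 2)))"
    by (simp add: algebra_simps)
  also have "\<dots> = iexp x" by (rule exp_plus_2pin)
  finally show ?thesis .
qed

lemma iexp_eq_imp: "iexp a = iexp b \<Longrightarrow> \<exists>m::int. a = b + 2 * pi * m"
proof -
  assume "iexp a = iexp b"
  then obtain n where n: "\<i> * complex_of_real a = \<i> * complex_of_real b + complex_of_real (real_of_int (2 * n) * pi) * \<i>"
    unfolding exp_eq by blast
  then have "Im (\<i> * complex_of_real a) = Im (\<i> * complex_of_real b + complex_of_real (real_of_int (2 * n) * pi) * \<i>)"
    by simp
  then have "a = b + 2 * pi * n" by simp
  then show ?thesis by blast
qed

lemma HL_box_iff: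
  "z \<in> HL_box n j \<longleftrightarrow> 1 - 1 / 2 ^ n \<le> norm z \<and> norm z < 1 - 1 / 2 ^ (n + 1) \<and>
      (\<exists>m::int. (2 * real j - 1) * pi / 2 ^ n \<le> Arg z + 2 * pi * m \<and>
                Arg z + 2 * pi * m < (2 * real j + 1) * pi / 2 ^ n)"
  by (simp add: HL_box_def)

definition xi :: "nat \<Rightarrow> nat \<Rightarrow> complex" where
  "xi n j = iexp (2 * pi * real j / 2 ^ n)"

lemma norm_xi[simp]: "norm (xi n j) = 1"
  by (simp add: xi_def norm_exp_eq_Re)

lemma box_in_window:
  assumes n: "1 \<le> n"
  shows "HL_box n j \<subseteq> carleson_window (xi n j) (1 / 2 ^ n)"
proof
  fix z assume z: "z \<in> HL_box n j"
  then obtain m :: int where r1: "1 - 1 / 2 ^ n \<le> norm z" and r2: "norm z < 1 - 1 / 2 ^ (n + 1)"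
    and a1: "(2 * real j - 1) * pi / 2 ^ n \<le> Arg z + 2 * pi * m"
    and a2: "Arg z + 2 * pi * m < (2 * real j + 1) * pi / 2 ^ n"
    unfolding HL_box_iff by blast
  have p2: "(2::real) \<le> 2 ^ n" using n by (metis power_one_right power_increasing one_le_numeral)
  have t2: "1 / 2 ^ n \<le> (1/2::real)" using p2 by (simp add: field_simps)
  have z0: "0 < norm z" using r1 t2 by linarith
  define \<phi>0 where "\<phi>0 = 2 * pi * real j / 2 ^ n"
  define \<psi> where "\<psi> = Arg z + 2 * pi * m - \<phi>0"
  have e1: "(2 * real j - 1) * pi / 2 ^ n = \<phi>0 - pi * (1 / 2 ^ n)"
    by (simp add: \<phi>0_def field_simps)
  have e2: "(2 * real j + 1) * pi / 2 ^ n = \<phi>0 + pi * (1 / 2 ^ n)"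
    by (simp add: \<phi>0_def field_simps)
  have pb: "pi * (1 / 2 ^ n) \<le> pi / 2" using t2 by (simp add: field_simps)
  have \<psi>1: "- (pi * (1 / 2 ^ n)) \<le> \<psi>" "\<psi> < pi * (1 / 2 ^ n)"
    using a1 a2 unfolding e1 e2 \<psi>_def by linarith+
  have "z * cnj (xi n j) = of_real (norm z) * iexp (Arg z) * iexp (- \<phi>0)"
    using Arg_eq[of z] z0 by (simp add: xi_def \<phi>0_def exp_cnj)
  also have "\<dots> = of_real (norm z) * iexp (Arg z - \<phi>0)"
    by (simp add: exp_add[symmetric] algebra_simps)
  also have "iexp (Arg z - \<phi>0) = iexp \<psi>"
    using iexp_add_2pi[of "Arg z - \<phi>0" m] by (simp add: \<psi>_def algebra_simps)
  finally have "z * cnj (xi n j) = of_real (norm z) * iexp \<psi>" .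
  moreover have "- pi < \<psi>" "\<psi> \<le> pi" using \<psi>1 pb pi_gt_zero by linarith+
  ultimately have "Arg (z * cnj (xi n j)) = \<psi>"
    by (intro Arg_unique[OF _ z0]) simp_all
  then show "z \<in> carleson_window (xi n j) (1 / 2 ^ n)"
    unfolding carleson_window_def using r1 r2 \<psi>1 by auto
qed



definition rectR :: "nat \<Rightarrow> complex set" where
  "rectR n = cbox (Complex (1 - 1/2^n) (- (3/2 * (1/2^n)))) (Complex (1 - 2/3 * (1/2^n)) (3/2 * (1/2^n)))"

lemma rect_in_box:
  assumes n: "3 \<le> n"
  shows "(\<lambda>w. xi n j * w) ` rectR n \<subseteq> HL_box n j"
proof
  fix z assume "z \<in> (\<lambda>w. xi n j * w) ` rectR n"
  then obtain w where w: "w \<in> rectR n" and zw: "z = xi n j * w" by blast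
  define t where "t = (1/2^n :: real)"
  have t0: "0 < t" by (simp add: t_def)
  have "(2::real)^3 \<le> 2^n" using n by (intro power_increasing) auto
  then have t8: "t \<le> 1/8" by (simp add: t_def field_simps)
  from w have x1: "1 - t \<le> Re w" "Re w \<le> 1 - 2/3*t" and y1: "-(3/2*t) \<le> Im w" "Im w \<le> 3/2*t"
    by (auto simp: rectR_def in_cbox_complex_iff t_def)
  have x0: "0 < Re w" using x1 t8 by linarith
  have nz: "norm z = norm w" by (simp add: zw norm_mult)
  have lo: "1 - t \<le> norm w" using x1 abs_Re_le_cmod[of w] by linarith
  have hi: "norm w < 1 - t/2"
  proof -
    have h1: "(Re w)^2 \<le> (1 - 2/3*t)^2" by (rule power_mono) (use x1 x0 in auto)
    have "\<bar>Im w\<bar> \<le> 3/2*t" using y1 by linarith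
    then have "\<bar>Im w\<bar>^2 \<le> (3/2*t)^2" by (rule power_mono) simp
    then have h2: "(Im w)^2 \<le> (3/2*t)^2" by simp
    have e1: "(1 - 2/3*t)^2 + (3/2*t)^2 = 1 - 4/3*t + 97/36*(t*t)" by (simp add: power2_eq_square algebra_simps)
    have e2: "(1 - t/2)^2 = 1 - t + 9/36*(t*t)" by (simp add: power2_eq_square algebra_simps)
    have "0 < t * (3 - 22*t)" using t0 t8 by (intro mult_pos_pos) auto
    then have h3: "0 < 3*t - 22*(t*t)" by (simp add: algebra_simps)
    have "(norm w)^2 < (1 - t/2)^2"
      unfolding cmod_power2 e2 using h1 h2 h3 e1 by linarith
    then show ?thesis by (rule power_less_imp_less_base) (use t8 in auto)
  qed
  have r: "1 - 1/2^(n+1) = 1 - t/2" by (simp add: t_def)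
  define a where "a = Arg w"
  have a: "a = arctan (Im w / Re w)" using arg_conv_arctan[OF x0] by (simp add: a_def)
  have "\<bar>Im w / Re w\<bar> = \<bar>Im w\<bar> / Re w" using x0 by (simp add: abs_div)
  also have "\<dots> \<le> (3/2*t) / (1 - t)"
    by (rule frac_le) (use y1 x1 t8 in auto)
  also have "\<dots> \<le> (3/2*t) / (7/8)"
    by (rule divide_left_mono) (use t0 t8 in auto)
  also have "\<dots> < pi * t" using pi_gt3 t0 by (simp add: field_simps)
  finally have aa: "\<bar>a\<bar> < pi * t" using abs_arctan_le[of "Im w / Re w"] a by linarith
  have w0: "w \<noteq> 0" using x0 by auto
  define \<phi>0 where "\<phi>0 = 2 * pi * real j / 2 ^ n"
  have "z = of_real (norm w) * (xi n j * iexp a)"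
    using Arg_eq[OF w0] by (simp add: zw a_def algebra_simps)
  also have "xi n j * iexp a = iexp (\<phi>0 + a)"
    by (simp add: xi_def \<phi>0_def exp_add[symmetric] algebra_simps)
  finally have z1: "z = of_real (norm w) * iexp (\<phi>0 + a)" .
  have z0: "z \<noteq> 0" using nz w0 by auto
  have A1: "z = of_real (norm w) * iexp (Arg z)" using Arg_eq[OF z0, unfolded nz] .
  have "of_real (norm w) * iexp (Arg z) = of_real (norm w) * iexp (\<phi>0 + a)"
    by (rule trans[OF A1[symmetric] z1])
  then have "iexp (Arg z) = iexp (\<phi>0 + a)" using w0 by simp
  then obtain m :: int where m: "Arg z = \<phi>0 + a + 2 * pi * m" using iexp_eq_imp by blast
  have e1: "(2 * real j - 1) * pi / 2 ^ n = \<phi>0 - pi * t"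
    by (simp add: \<phi>0_def t_def field_simps)
  have e2: "(2 * real j + 1) * pi / 2 ^ n = \<phi>0 + pi * t"
    by (simp add: \<phi>0_def t_def field_simps)
  have "(2 * real j - 1) * pi / 2 ^ n \<le> Arg z + 2 * pi * of_int (- m) \<and>
        Arg z + 2 * pi * of_int (- m) < (2 * real j + 1) * pi / 2 ^ n"
    unfolding e1 e2 m using aa by (simp add: algebra_simps; linarith)
  then have ex: "\<exists>m'::int. (2 * real j - 1) * pi / 2 ^ n \<le> Arg z + 2 * pi * m' \<and>
        Arg z + 2 * pi * m' < (2 * real j + 1) * pi / 2 ^ n"
    by (rule exI[of _ "- m"])
  have "1 - 1 / 2 ^ n \<le> norm z \<and> norm z < 1 - 1 / 2 ^ (n + 1)"
    using nz lo hi r by (simp add: t_def)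
  then show "z \<in> HL_box n j"
    unfolding HL_box_iff using ex by blast
qed

lemma lt_pow2: "j \<le> 2^n - 1 \<Longrightarrow> j < (2::nat)^n"
proof -
  assume a: "j \<le> 2^n - 1"
  have "(0::nat) < 2^n" by simp
  with a show ?thesis by arith
qed

lemma box_level_le:
  assumes "z \<in> HL_box n j" "z \<in> HL_box n' j'"
  shows "n \<le> n'"
proof (rule ccontr)
  assume "\<not> n \<le> n'"
  then have "n' + 1 \<le> n" by simp
  then have "(2::real) ^ (n' + 1) \<le> 2 ^ n" by (intro power_increasing) auto
  then have "1 / 2 ^ n \<le> 1 / (2::real) ^ (n' + 1)" by (intro divide_left_mono) auto
  moreover have "1 - 1 / 2 ^ n \<le> norm z" using assms(1) by (simp add: HL_box_iff)
  moreover have "norm z < 1 - 1 / 2 ^ (n' + 1)" using assms(2) by (simp add: HL_box_iff)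
  ultimately show False by linarith
qed

lemma box_disjoint:
  assumes z: "z \<in> HL_box n j" "z \<in> HL_box n' j'" and j: "j \<le> 2^n - 1" "j' \<le> 2^n' - 1"
  shows "n = n' \<and> j = j'"
proof -
  have nn: "n = n'" using box_level_le[OF z] box_level_le[OF z(2) z(1)] by simp
  obtain m :: int where m1: "(2 * real j - 1) * pi / 2 ^ n \<le> Arg z + 2 * pi * m"
    and m2: "Arg z + 2 * pi * m < (2 * real j + 1) * pi / 2 ^ n"
    using z(1) unfolding HL_box_iff by blast
  obtain m' :: int where m1': "(2 * real j' - 1) * pi / 2 ^ n \<le> Arg z + 2 * pi * m'"
    and m2': "Arg z + 2 * pi * m' < (2 * real j' + 1) * pi / 2 ^ n"
    using z(2) unfolding HL_box_iff nn[symmetric] by blast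
  define D :: real where "D = 2 ^ n"
  have D0: "0 < D" by (simp add: D_def)
  define c where "c = 2 * pi / D"
  have c0: "0 < c" using D0 by (simp add: c_def)
  have ej: "(2 * real i - 1) * pi / 2 ^ n = (real i - 1/2) * c" "(2 * real i + 1) * pi / 2 ^ n = (real i + 1/2) * c" for i
    by (simp_all add: c_def D_def field_simps)
  define k where "k = m - m'"
  have ek: "2 * pi * m - 2 * pi * m' = (real_of_int k * D) * c"
    using D0 by (simp add: k_def c_def field_simps)
  have "(real j - real j' - 1) * c < (real_of_int k * D) * c"
    using m1 m2' unfolding ej ek[symmetric] by (simp add: algebra_simps; linarith)
  then have l1: "real j - real j' - 1 < real_of_int k * D" using c0 by simp
  have "(real_of_int k * D) * c < (real j - real j' + 1) * c"
    using m2 m1' unfolding ej ek[symmetric] by (simp add: algebra_simps; linarith)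
  then have l2: "real_of_int k * D < real j - real j' + 1" using c0 by simp
  have Dint: "D = of_int (2 ^ n)" by (simp add: D_def)
  have "real_of_int (int j - int j' - 1) < real_of_int (k * 2 ^ n)" using l1 by (simp add: D_def)
  then have i1: "int j - int j' - 1 < k * 2 ^ n" by (simp only: of_int_less_iff)
  have "real_of_int (k * 2 ^ n) < real_of_int (int j - int j' + 1)" using l2 by (simp add: D_def)
  then have i2: "k * 2 ^ n < int j - int j' + 1" by (simp only: of_int_less_iff)
  have "j < 2^n" "j' < 2^n" using lt_pow2[OF j(1)] lt_pow2[OF j(2)] nn by auto
  then have jb: "int j < 2 ^ n" "int j' < 2 ^ n"
    by (metis of_nat_less_iff of_nat_numeral of_nat_power)+
  have "k = 0"
  proof (rule ccontr)
    assume "k \<noteq> 0"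
    then consider "k \<ge> 1" | "k \<le> -1" by linarith
    then show False
    proof cases
      case 1
      then have "k * 2 ^ n \<ge> 1 * 2 ^ n" by (intro mult_right_mono) auto
      then show False using i2 jb by linarith
    next
      case 2
      then have "k * 2 ^ n \<le> -1 * 2 ^ n" by (intro mult_right_mono) auto
      then show False using i1 jb by linarith
    qed
  qed
  then have "int j = int j'" using i1 i2 by simp
  then show ?thesis using nn by simp
qed



lemma box_cover:
  assumes z: "norm z < 1"
  shows "\<exists>n j. j \<le> 2^n - 1 \<and> z \<in> HL_box n j"
proof -
  have ex: "\<exists>n. norm z < 1 - 1/2^(n+1)"
  proof -
    obtain n where n: "(1/2::real)^n < 1 - norm z" using real_arch_pow_inv[of "1 - norm z" "1/2"] z by auto
    have "(2::real)^n \<le> 2^(n+1)" by (rule power_increasing) auto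
    then have "1/2^(n+1) \<le> 1/(2::real)^n" by (rule divide_left_mono) auto
    then have "1/2^(n+1) \<le> (1/2::real)^n" by (simp add: power_one_over)
    then show ?thesis using n by (intro exI[of _ n]) linarith
  qed
  define n where "n = (LEAST n. norm z < 1 - 1/2^(n+1))"
  have n1: "norm z < 1 - 1/2^(n+1)" unfolding n_def by (rule LeastI_ex[OF ex])
  have n2: "1 - 1/2^n \<le> norm z"
  proof (cases n)
    case 0 then show ?thesis by simp
  next
    case (Suc k)
    then have "k < n" by simp
    then have "\<not> norm z < 1 - 1/2^(k+1)" unfolding n_def by (rule not_less_Least)
    then show ?thesis using Suc by simp
  qed
  define D :: real where "D = 2^n"
  have D0: "0 < D" by (simp add: D_def)
  define u where "u = Arg z * D / (2*pi) + 1/2"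
  define j0 where "j0 = \<lfloor>u\<rfloor>"
  define q :: int where "q = j0 div 2^n"
  define jj :: int where "jj = j0 mod 2^n"
  have jj0: "0 \<le> jj" "jj < 2^n" by (simp_all add: jj_def)
  have j0eq: "j0 = q * 2^n + jj" unfolding q_def jj_def by (rule div_mult_mod_eq[symmetric])
  define j where "j = nat jj"
  have rj: "real j = of_int jj" using jj0 by (simp add: j_def)
  have "j < 2^n" using jj0 unfolding j_def by (simp add: nat_less_iff)
  then have jle: "j \<le> 2^n - 1" by arith
  define c where "c = 2*pi/D"
  have c0: "0 < c" using D0 by (simp add: c_def)
  have fl: "of_int j0 \<le> u" "u < of_int j0 + 1" using floor_correct[of u] by (auto simp: j0_def)
  have argeq: "Arg z + 2 * pi * of_int (- q) = (u - 1/2 - of_int q * D) * c"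
    using D0 by (simp add: u_def c_def field_simps)
  have ej1: "(2 * real j - 1) * pi / 2^n = (real j - 1/2) * c"
    by (simp add: c_def D_def field_simps)
  have ej2: "(2 * real j + 1) * pi / 2^n = (real j + 1/2) * c"
    by (simp add: c_def D_def field_simps)
  have rjq: "real j = of_int j0 - of_int q * D" using j0eq rj by (simp add: D_def)
  have "(real j - 1/2) * c \<le> (u - 1/2 - of_int q * D) * c"
    by (rule mult_right_mono) (use fl rjq c0 in auto)
  moreover have "(u - 1/2 - of_int q * D) * c < (real j + 1/2) * c"
    by (rule mult_strict_right_mono) (use fl rjq c0 in auto)
  ultimately have "\<exists>m::int. (2 * real j - 1) * pi / 2 ^ n \<le> Arg z + 2 * pi * m \<and>
                Arg z + 2 * pi * m < (2 * real j + 1) * pi / 2 ^ n"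
    unfolding ej1 ej2 argeq[symmetric] by blast
  then have "z \<in> HL_box n j" unfolding HL_box_iff using n1 n2 by simp
  then show ?thesis using jle by blast
qed

lemma HL_index_exists: "\<exists>n j. j \<le> 2^n - 1 \<and> k = 2^n + j - (1::nat)"
proof (induction k)
  case 0
  show ?case by (rule exI[of _ 0], rule exI[of _ 0]) simp
next
  case (Suc k)
  then obtain n j where nj: "j \<le> 2^n - 1" "k = 2^n + j - 1" by blast
  have p: "(1::nat) \<le> 2^n" by simp
  show ?case
  proof (cases "j < 2^n - 1")
    case True
    then have "j + 1 \<le> 2^n - 1 \<and> Suc k = 2^n + (j + 1) - 1" using nj p by arith
    then show ?thesis by blast
  next
    case False
    then have "j = 2^n - 1" using nj by arith
    moreover have e: "(2::nat)^(Suc n) = 2^n + 2^n" by simp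
    ultimately have "0 \<le> 2^(Suc n) - (1::nat) \<and> Suc k = 2^(Suc n) + 0 - 1" using nj p by arith
    then show ?thesis by blast
  qed
qed

lemma HL_index_le:
  assumes "j' \<le> 2^n' - 1" "2^n + j = 2^n' + (j'::nat)"
  shows "n \<le> n'"
proof (rule ccontr)
  assume "\<not> n \<le> n'"
  then have "Suc n' \<le> n" by simp
  then have "2^(Suc n') \<le> (2::nat)^n" by (rule power_increasing) simp
  then have "2 * 2^n' \<le> (2::nat)^n" by simp
  moreover have "(1::nat) \<le> 2^n'" by simp
  ultimately show False using assms by arith
qed

lemma HL_index_unique:
  assumes "j \<le> 2^n - 1" "j' \<le> 2^n' - 1" "2^n + j - 1 = 2^n' + j' - (1::nat)"
  shows "n = n' \<and> j = j'"
proof -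
  have p: "(1::nat) \<le> 2^n" "(1::nat) \<le> 2^n'" by simp_all
  have a: "2^n + j = 2^n' + j'" using assms(3) p by arith
  have "n \<le> n'" by (rule HL_index_le[OF assms(2) a])
  moreover have "n' \<le> n" by (rule HL_index_le[OF assms(1) a[symmetric]])
  ultimately have "n = n'" by simp
  then show ?thesis using a by simp
qed

definition bnj :: "nat \<Rightarrow> nat \<times> nat" where
  "bnj k = (SOME p. snd p \<le> 2^fst p - 1 \<and> k = 2^fst p + snd p - 1)"

definition bn :: "nat \<Rightarrow> nat" where "bn k = fst (bnj k)"
definition bj :: "nat \<Rightarrow> nat" where "bj k = snd (bnj k)"

lemma bnj_prop: "bj k \<le> 2^bn k - 1 \<and> k = 2^bn k + bj k - 1"
proof -
  obtain n j where "j \<le> 2^n - 1 \<and> k = 2^n + j - 1" using HL_index_exists by blast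
  then have "\<exists>p. snd p \<le> 2^fst p - 1 \<and> k = 2^fst p + snd p - 1" by (intro exI[of _ "(n, j)"]) simp
  from someI_ex[OF this] show ?thesis by (simp add: bn_def bj_def bnj_def)
qed

lemma HL_set_eq: "HL_set k = HL_box (bn k) (bj k)"
proof -
  have "{HL_box n j |n j. j \<le> 2 ^ n - 1 \<and> k = 2 ^ n + j - 1} = {HL_box (bn k) (bj k)}"
  proof (intro equalityI subsetI)
    fix X assume "X \<in> {HL_box n j |n j. j \<le> 2 ^ n - 1 \<and> k = 2 ^ n + j - 1}"
    then obtain n j where X: "X = HL_box n j" "j \<le> 2 ^ n - 1" "k = 2 ^ n + j - 1" by blast
    then have "n = bn k \<and> j = bj k" using bnj_prop[of k] HL_index_unique[of j n "bj k" "bn k"] by simp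
    then show "X \<in> {HL_box (bn k) (bj k)}" using X by simp
  next
    fix X assume "X \<in> {HL_box (bn k) (bj k)}"
    then show "X \<in> {HL_box n j |n j. j \<le> 2 ^ n - 1 \<and> k = 2 ^ n + j - 1}"
      using bnj_prop[of k] by blast
  qed
  then show ?thesis unfolding HL_set_def by simp
qed

lemma HL_set_disj:
  assumes "z \<in> HL_set k" "z \<in> HL_set k'"
  shows "k = k'"
proof -
  have "bn k = bn k' \<and> bj k = bj k'"
    using box_disjoint[of z "bn k" "bj k" "bn k'" "bj k'"] assms bnj_prop[of k] bnj_prop[of k']
    by (simp add: HL_set_eq)
  then show ?thesis using bnj_prop[of k] bnj_prop[of k'] by metis
qed

lemma HL_set_cover:
  assumes "norm z < 1"
  shows "\<exists>k. z \<in> HL_set k"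
proof -
  obtain n j where nj: "j \<le> 2^n - 1" "z \<in> HL_box n j" using box_cover[OF assms] by blast
  define k where "k = 2^n + j - 1"
  have "bn k = n \<and> bj k = j"
    using bnj_prop[of k] HL_index_unique[of "bj k" "bn k" j n] nj(1) by (simp add: k_def)
  then have "z \<in> HL_set k" using nj by (simp add: HL_set_eq)
  then show ?thesis by blast
qed

lemma Lambda_f_eq:
  assumes "z \<in> HL_set k"
  shows "Lambda_f f z = (SUP w\<in>HL_set k. norm (f w))"
proof -
  have "(\<Sum>k'. (SUP w\<in>HL_set k'. norm (f w)) * indicator (HL_set k') z) =
        (\<Sum>k'\<in>{k}. (SUP w\<in>HL_set k'. norm (f w)) * indicator (HL_set k') z)"
  proof (rule suminf_finite)
    fix k' assume "k' \<notin> {k}"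
    then have "z \<notin> HL_set k'" using HL_set_disj[OF assms] by auto
    then show "(SUP w\<in>HL_set k'. norm (f w)) * indicator (HL_set k') z = 0" by simp
  qed simp
  then show ?thesis using assms by (simp add: Lambda_f_def)
qed

lemma emeasure_rot_rect:
  assumes w: "norm \<omega> = 1"
  shows "emeasure lborel ((\<lambda>w. \<omega> * w) ` rectR n) = ennreal ((1/2^n)^2)"
proof -
  have cpt: "compact ((\<lambda>w. \<omega> * w) ` rectR n)"
    unfolding rectR_def by (intro compact_continuous_image continuous_intros compact_cbox)
  then have B[measurable]: "(\<lambda>w. \<omega> * w) ` rectR n \<in> sets borel"
    by (intro borel_closed compact_imp_closed)
  have w0: "\<omega> \<noteq> 0" using w by auto
  have ind: "indicator ((\<lambda>w. \<omega> * w) ` rectR n) (\<omega> * z) = (indicator (rectR n) z :: ennreal)" for z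
    using w0 by (auto simp: indicator_def)
  have "emeasure lborel ((\<lambda>w. \<omega> * w) ` rectR n) = (\<integral>\<^sup>+z. indicator ((\<lambda>w. \<omega> * w) ` rectR n) z \<partial>lborel)"
    by simp
  also have "\<dots> = (\<integral>\<^sup>+z. indicator ((\<lambda>w. \<omega> * w) ` rectR n) (\<omega> * z) \<partial>lborel)"
    by (rule nn_integral_rotate[symmetric, OF _ w]) simp
  also have "\<dots> = (\<integral>\<^sup>+z. indicator (rectR n) z \<partial>lborel)" unfolding ind ..
  also have "\<dots> = emeasure lborel (rectR n)" by (simp add: rectR_def)
  also have "\<dots> = ennreal ((1/2^n)^2)"
    by (simp add: rectR_def emeasure_lborel_cbox_eq Basis_complex_def inner_complex_def power2_eq_square field_simps)
  finally show ?thesis .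
qed

lemma emeasure_area_D:
  assumes "S \<in> sets borel" "S \<subseteq> unit_disc"
  shows "emeasure area_D S = ennreal (1/pi) * emeasure lborel S"
proof -
  have sD: "unit_disc \<inter> space lborel \<in> sets lborel" by (simp add: unit_disc_def)
  have S1: "S \<in> sets (restrict_space lborel unit_disc)"
    using assms by (simp add: sets_restrict_space_iff[OF sD])
  have "emeasure area_D S = (\<integral>\<^sup>+x\<in>S. ennreal (1/pi) \<partial>restrict_space lborel unit_disc)"
    unfolding area_D_def by (rule emeasure_density[OF _ S1]) simp
  also have "\<dots> = (\<integral>\<^sup>+x. (ennreal (1/pi) * indicator S x) * indicator unit_disc x \<partial>lborel)"
    by (rule nn_integral_restrict_space[OF sD])
  also have "\<dots> = (\<integral>\<^sup>+x. ennreal (1/pi) * indicator S x \<partial>lborel)"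
    by (intro nn_integral_cong) (use assms(2) in \<open>auto split: split_indicator\<close>)
  also have "\<dots> = ennreal (1/pi) * emeasure lborel S"
    using assms(1) by (simp add: nn_integral_cmult_indicator)
  finally show ?thesis .
qed

lemma window_in_sets:
  assumes "sets \<mu> = sets (restrict_space borel unit_disc)"
  shows "carleson_window \<xi> h \<in> sets \<mu>"
proof -
  have sD: "unit_disc \<inter> space borel \<in> sets borel" by (simp add: unit_disc_def)
  have "carleson_window \<xi> h \<subseteq> unit_disc" by (auto simp: carleson_window_def unit_disc_def)
  then show ?thesis using window_borel unfolding assms sets_restrict_space_iff[OF sD] by simp
qed

lemma HL_box_sub_disc: "HL_box n j \<subseteq> unit_disc"
proof
  fix z assume "z \<in> HL_box n j"
  then have "norm z < 1 - 1/2^(n+1)" by (simp add: HL_box_iff)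
  moreover have "0 < 1/(2::real)^(n+1)" by simp
  ultimately have "norm z < 1" by linarith
  then show "z \<in> unit_disc" by (simp add: unit_disc_def)
qed



lemma box_pointwise:
  assumes o1: "orlicz \<Psi>1" and f: "f \<in> bergman_orlicz \<Psi>1" "lux_norm \<Psi>1 f \<le> 1"
    and w: "w \<in> HL_box n j"
  shows "\<Psi>1 (norm (f w)) \<le> 4 * (2^n)^2"
proof -
  define r :: real where "r = 1/2^(n+1)"
  have r0: "0 < r" by (simp add: r_def)
  have "norm w + r < 1" using w by (simp add: HL_box_iff r_def)
  then have "r^2 * \<Psi>1 (norm (f w)) \<le> 1" by (rule pointwise_bound[OF o1 f r0])
  moreover have "r^2 = 1 / (4 * (2^n)^2)" by (simp add: r_def power2_eq_square field_simps)
  ultimately show ?thesis by (simp add: field_simps)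
qed

lemma per_box:
  assumes sets: "sets \<mu> = sets (restrict_space borel unit_disc)" and fin: "finite_measure \<mu>"
    and o1: "orlicz \<Psi>1" and o2: "orlicz \<Psi>2" and A: "A > 0" and hA: "0 < hA" "hA \<le> 1/2"
    and hyp: "\<forall>h. 0 < h \<and> h < hA \<longrightarrow> K_mu2 \<mu> h \<le> ereal ((1 / h\<^sup>2) / \<Psi>2 (A * orlicz_inv \<Psi>1 (1 / h\<^sup>2)))"
    and f: "f \<in> bergman_orlicz \<Psi>1" "lux_norm \<Psi>1 f \<le> 1"
    and z0: "z0 \<in> HL_set k" "(A/8) * orlicz_inv \<Psi>1 (4/hA^2) < A * norm (f z0) / 64"
  defines "s \<equiv> (SUP w\<in>HL_set k. norm (f w))"
  shows "3 \<le> bn k" "\<And>z. z \<in> HL_set k \<Longrightarrow> norm (f z) \<le> s"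
    "emeasure \<mu> (carleson_window (xi (bn k) (bj k)) (1/2^(bn k))) * ennreal (\<Psi>2 (A * s / 64))
      \<le> ennreal (1/8) * (ennreal (\<Psi>1 s) * emeasure area_D ((\<lambda>w. xi (bn k) (bj k) * w) ` rectR (bn k)))"
proof -
  define n where "n = bn k"
  define j where "j = bj k"
  have HS: "HL_set k = HL_box n j" by (simp add: HL_set_eq n_def j_def)
  define B :: real where "B = 4 * (2^n)^2"
  have B0: "0 \<le> B" by (simp add: B_def)
  have bw: "\<Psi>1 (norm (f w)) \<le> B" if "w \<in> HL_set k" for w
    using box_pointwise[OF o1 f] that by (simp add: HS B_def)
  have bw2: "norm (f w) \<le> orlicz_inv \<Psi>1 B" if "w \<in> HL_set k" for w
    using bw[OF that] orlicz_le_inv_iff[OF o1 _ B0] by simp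
  have bdd: "bdd_above ((\<lambda>w. norm (f w)) ` HL_set k)"
    using bw2 by (intro bdd_aboveI2) blast
  have ne: "HL_set k \<noteq> {}" using z0 by auto
  show sup: "norm (f z) \<le> s" if "z \<in> HL_set k" for z
    unfolding s_def by (rule cSUP_upper[OF that bdd])
  have sB: "s \<le> orlicz_inv \<Psi>1 B" unfolding s_def by (rule cSUP_least[OF ne bw2])
  have s0: "0 \<le> s" using sup[OF z0(1)] norm_ge_zero[of "f z0"] by linarith
  define P where "P = \<Psi>1 s"
  have PB: "P \<le> B" using sB orlicz_le_inv_iff[OF o1 s0 B0] by (simp add: P_def)
  define y0 where "y0 = orlicz_inv \<Psi>1 (4/hA^2)"
  have y00: "0 \<le> y0" and Py0: "\<Psi>1 y0 = 4/hA^2" using orlicz_inv[OF o1, of "4/hA^2"] by (auto simp: y0_def)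
  have "8 * y0 < norm (f z0)" using z0(2) A by (simp add: y0_def field_simps)
  then have s8: "8 * y0 < s" using sup[OF z0(1)] by simp
  have "\<Psi>1 y0 \<le> (1/8) * \<Psi>1 (8 * y0)"
    using orlicz_scale[OF o1, of "1/8" "8 * y0"] y00 by simp
  moreover have "\<Psi>1 (8 * y0) < P" unfolding P_def by (rule orlicz_strict[OF o1 _ s8]) (use y00 in simp)
  ultimately have P32: "32 / hA^2 < P" using Py0 by simp
  have hA2: "0 < hA^2" using hA by simp
  have P0: "0 < P" using P32 hA2 by (smt (verit) divide_pos_pos)
  define t :: real where "t = 1/2^n"
  have t0: "0 < t" by (simp add: t_def)
  have Bt: "B = 4 / t^2" by (simp add: B_def t_def power2_eq_square field_simps)
  define h where "h = sqrt (32 / P)"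
  have h0: "0 < h" using P0 by (simp add: h_def)
  have h2: "h^2 = 32 / P" using P0 by (simp add: h_def)
  have "32 / P < hA^2" using P32 P0 hA2 by (simp add: field_simps)
  then have hhA: "h < hA" using h0 hA by (smt (verit) h2 power_mono)
  have "t^2 * P \<le> t^2 * B" using PB t0 by simp
  also have "\<dots> = 4" using t0 by (simp add: Bt)
  finally have tP: "t^2 * P \<le> 4" .
  have th8: "8 * t^2 \<le> h^2" using tP P0 unfolding h2 by (simp add: field_simps)
  have th: "t < h"
  proof -
    have "0 < t^2" using t0 by simp
    then have "t^2 < h^2" using th8 by linarith
    then show ?thesis using h0 t0 by (smt (verit) power_mono)
  qed
  show n3: "3 \<le> bn k"
  proof (rule ccontr)
    assume "\<not> 3 \<le> bn k"
    then have "n \<le> 2" by (simp add: n_def)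
    then have "(2::real)^n \<le> 2^2" by (intro power_increasing) auto
    then have "1/4 \<le> t" by (simp add: t_def field_simps)
    then have "(1/4)^2 \<le> t^2" by (rule power_mono) simp
    then have "1/16 \<le> t^2" by (simp add: power2_eq_square)
    moreover have "h^2 < hA^2" using hhA h0 by (simp add: power_strict_mono)
    moreover have "hA^2 \<le> (1/2)^2" by (rule power_mono) (use hA in auto)
    then have "hA^2 \<le> 1/4" by (simp add: power2_eq_square)
    ultimately show False using th8 by linarith
  qed
  define \<xi> where "\<xi> = xi n j"
  define W where "W = carleson_window \<xi> t"
  define rho where "rho = rho_mu \<mu> t"
  have bddW: "bdd_above ((\<lambda>\<xi>. measure \<mu> (carleson_window \<xi> t)) ` sphere 0 1)"
    using finite_measure.bounded_measure[OF fin] by (intro bdd_aboveI2) blast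
  have mW: "measure \<mu> W \<le> rho"
    unfolding rho_def rho_mu_def W_def by (rule cSUP_upper[OF _ bddW]) (simp add: \<xi>_def)
  have "ereal (rho / t^2) \<le> K_mu2 \<mu> h"
    unfolding K_mu2_def rho_def by (rule SUP_upper) (use t0 th in simp)
  also have "\<dots> \<le> ereal ((1 / h\<^sup>2) / \<Psi>2 (A * orlicz_inv \<Psi>1 (1 / h\<^sup>2)))"
    using hyp h0 hhA by blast
  finally have Kb: "rho / t^2 \<le> (1 / h\<^sup>2) / \<Psi>2 (A * orlicz_inv \<Psi>1 (1 / h\<^sup>2))" by simp
  have ih: "1 / h^2 = P / 32" using h2 P0 by simp
  define Q where "Q = \<Psi>2 (A * orlicz_inv \<Psi>1 (P / 32))"
  have P32p: "0 \<le> P / 32" using P0 by simp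
  have "\<Psi>1 (s / 64) \<le> (1/64) * P"
    using orlicz_scale[OF o1, of "1/64" s] s0 by (simp add: P_def)
  then have "\<Psi>1 (s / 64) \<le> P / 32" using P0 by simp
  then have sinv: "s / 64 \<le> orlicz_inv \<Psi>1 (P / 32)"
    using orlicz_le_inv_iff[OF o1 _ P32p] s0 by simp
  have spos: "0 < s" using s8 y00 by simp
  have QA: "\<Psi>2 (A * s / 64) \<le> Q"
    unfolding Q_def using sinv A spos by (intro orlicz_mono[OF o2]) (auto simp: field_simps)
  have Q0: "0 < Q"
    unfolding Q_def using sinv A spos by (intro orlicz_pos[OF o2] mult_pos_pos) auto
  have rhoQ: "rho \<le> t^2 * (P / 32) / Q"
    using Kb t0 unfolding ih Q_def[symmetric] by (simp add: field_simps)
  have mW0: "0 \<le> measure \<mu> W" by simp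
  have Psi2_0: "0 \<le> \<Psi>2 (A * s / 64)" using A s0 by (intro orlicz_nonneg[OF o2]) simp
  have "measure \<mu> W * \<Psi>2 (A * s / 64) \<le> rho * Q"
    using mW QA mW0 Psi2_0 by (intro mult_mono) (auto intro: order_trans[OF mW0 mW])
  also have "\<dots> \<le> t^2 * (P / 32) / Q * Q" using rhoQ Q0 by (intro mult_right_mono) auto
  also have "\<dots> = t^2 * P / 32" using Q0 by simp
  also have "\<dots> \<le> 1/8 * (P * (1/pi * t^2))"
    using pi_less_4 P0 t0 by (simp add: field_simps)
  finally have real_ineq: "measure \<mu> W * \<Psi>2 (A * s / 64) \<le> 1/8 * (P * (1/pi * t^2))" .
  have Rsub: "(\<lambda>w. \<xi> * w) ` rectR n \<subseteq> unit_disc"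
    using rect_in_box[of n j] n3 HL_box_sub_disc[of n j] by (auto simp: n_def \<xi>_def)
  have Rb: "(\<lambda>w. \<xi> * w) ` rectR n \<in> sets borel"
    unfolding rectR_def by (intro borel_closed compact_imp_closed compact_continuous_image continuous_intros compact_cbox)
  have areaR: "emeasure area_D ((\<lambda>w. \<xi> * w) ` rectR n) = ennreal (1/pi * t^2)"
    using emeasure_area_D[OF Rb Rsub] emeasure_rot_rect[of \<xi> n]
    by (simp add: \<xi>_def t_def ennreal_mult[symmetric])
  have eW: "emeasure \<mu> W = ennreal (measure \<mu> W)" by (rule finite_measure.emeasure_eq_measure[OF fin])
  have "emeasure \<mu> W * ennreal (\<Psi>2 (A * s / 64)) = ennreal (measure \<mu> W * \<Psi>2 (A * s / 64))"
    unfolding eW using mW0 Psi2_0 by (simp add: ennreal_mult)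
  also have "\<dots> \<le> ennreal (1/8 * (P * (1/pi * t^2)))" by (rule ennreal_leI[OF real_ineq])
  also have "\<dots> = ennreal (1/8) * (ennreal P * ennreal (1/pi * t^2))"
  proof -
    have e1: "ennreal P * ennreal (1/pi * t^2) = ennreal (P * (1/pi * t^2))"
      using P0 by (intro ennreal_mult[symmetric]) auto
    have e2: "ennreal (1/8) * ennreal (P * (1/pi * t^2)) = ennreal (1/8 * (P * (1/pi * t^2)))"
      using P0 by (intro ennreal_mult[symmetric]) auto
    show ?thesis unfolding e1 e2 ..
  qed
  finally show "emeasure \<mu> (carleson_window (xi (bn k) (bj k)) (1/2^(bn k))) * ennreal (\<Psi>2 (A * s / 64))
      \<le> ennreal (1/8) * (ennreal (\<Psi>1 s) * emeasure area_D ((\<lambda>w. xi (bn k) (bj k) * w) ` rectR (bn k)))"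
    unfolding areaR[unfolded \<xi>_def n_def j_def] by (simp add: W_def \<xi>_def n_def j_def t_def P_def)
qed



lemma ennreal_le_suminf_term: "(g::nat \<Rightarrow> ennreal) k \<le> (\<Sum>n. g n)"
proof -
  have "sum g {k} \<le> suminf g"
    by (rule sum_le_suminf) (auto intro: summableI)
  then show ?thesis by simp
qed

theorem lemma2p4:
  fixes \<mu> :: "complex measure" and \<Psi>1 \<Psi>2 :: "real \<Rightarrow> real" and A hA :: real
  assumes "sets \<mu> = sets (restrict_space borel unit_disc)"
    and "finite_measure \<mu>"
    and "orlicz \<Psi>1" and "orlicz \<Psi>2"
    and "A > 0" and "0 < hA" and "hA \<le> 1/2"
    and "\<forall>h. 0 < h \<and> h < hA \<longrightarrow>
           K_mu2 \<mu> h \<le> ereal ((1 / h\<^sup>2) / \<Psi>2 (A * orlicz_inv \<Psi>1 (1 / h\<^sup>2)))"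
  shows "\<forall>f \<in> bergman_orlicz \<Psi>1. lux_norm \<Psi>1 f \<le> 1 \<longrightarrow>
           (\<forall>E \<in> sets \<mu>.
              (\<integral>\<^sup>+ z\<in>E. ennreal (\<Psi>2 (A * norm (f z) / 64)) \<partial>\<mu>)
                \<le> emeasure \<mu> E * ennreal (\<Psi>2 ((A / 8) * orlicz_inv \<Psi>1 (4 / hA\<^sup>2)))
                  + ennreal (1/8) * (\<integral>\<^sup>+ z. ennreal (\<Psi>1 (Lambda_f f z)) \<partial>area_D))"
proof (intro ballI impI)
  note sets = assms(1) and fin = assms(2) and o1 = assms(3) and o2 = assms(4) and A = assms(5)
    and hA = assms(6) assms(7) and hyp = assms(8)
  fix f E assume f: "f \<in> bergman_orlicz \<Psi>1" and lux: "lux_norm \<Psi>1 f \<le> 1" and E: "E \<in> sets \<mu>"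
  define xA where "xA = (A / 8) * orlicz_inv \<Psi>1 (4 / hA\<^sup>2)"
  define s where "s = (\<lambda>k. SUP w\<in>HL_set k. norm (f w))"
  define P where "P = (\<lambda>k. \<exists>z\<in>HL_set k. xA < A * norm (f z) / 64)"
  define W where "W = (\<lambda>k. carleson_window (xi (bn k) (bj k)) (1/2^(bn k)))"
  define R where "R = (\<lambda>k. if 3 \<le> bn k then (\<lambda>w. xi (bn k) (bj k) * w) ` rectR (bn k) else {})"
  define T where "T = (\<lambda>k z. (if P k then ennreal (\<Psi>2 (A * s k / 64)) else 0) * indicator (W k) z)"
  define U where "U = (\<lambda>k z. (if P k then ennreal (\<Psi>1 (s k)) else 0) * indicator (R k) z)"
  have spmu: "space \<mu> = unit_disc"
    using sets_eq_imp_space_eq[OF sets] by (simp add: space_restrict_space)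
  have Wm: "W k \<in> sets \<mu>" for k unfolding W_def by (rule window_in_sets[OF sets])
  have PB: "P k \<Longrightarrow> 3 \<le> bn k \<and> (\<forall>z\<in>HL_set k. norm (f z) \<le> s k) \<and>
      emeasure \<mu> (W k) * ennreal (\<Psi>2 (A * s k / 64))
      \<le> ennreal (1/8) * (ennreal (\<Psi>1 (s k)) * emeasure area_D (R k))" for k
  proof -
    assume "P k"
    then obtain z0 where z0: "z0 \<in> HL_set k" "xA < A * norm (f z0) / 64" unfolding P_def by blast
    note pb = per_box[OF sets fin o1 o2 A hA hyp f lux z0[unfolded xA_def]]
    show ?thesis using pb unfolding s_def W_def R_def by auto
  qed
  have sD: "unit_disc \<inter> space lborel \<in> sets lborel" by (simp add: unit_disc_def)
  have Rm: "R k \<in> sets area_D" for k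
  proof (cases "3 \<le> bn k")
    case True
    have Rb: "R k \<in> sets borel"
      unfolding R_def rectR_def using True
      by (simp, intro borel_closed compact_imp_closed compact_continuous_image continuous_intros compact_cbox)
    have "R k \<subseteq> unit_disc"
      using rect_in_box[OF True, of "bj k"] HL_box_sub_disc[of "bn k" "bj k"] by (simp add: R_def True)
    then show ?thesis using Rb unfolding area_D_def sets_density sets_restrict_space_iff[OF sD] by simp
  next
    case False
    then show ?thesis by (simp add: R_def)
  qed
  have RH: "R k \<subseteq> HL_set k" for k
    using rect_in_box[of "bn k" "bj k"] by (auto simp: R_def HL_set_eq)
  have step1: "(\<integral>\<^sup>+ z\<in>E. ennreal (\<Psi>2 (A * norm (f z) / 64)) \<partial>\<mu>)
      \<le> (\<integral>\<^sup>+ z. ennreal (\<Psi>2 xA) * indicator E z + (\<Sum>k. T k z) \<partial>\<mu>)"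
  proof (rule nn_integral_mono)
    fix z assume zs: "z \<in> space \<mu>"
    show "ennreal (\<Psi>2 (A * norm (f z) / 64)) * indicator E z \<le> ennreal (\<Psi>2 xA) * indicator E z + (\<Sum>k. T k z)"
    proof (cases "z \<in> E")
      case False then show ?thesis by simp
    next
      case zE: True
      show ?thesis
      proof (cases "A * norm (f z) / 64 \<le> xA")
        case True
        then have "\<Psi>2 (A * norm (f z) / 64) \<le> \<Psi>2 xA" using A by (intro orlicz_mono[OF o2]) auto
        then show ?thesis using zE by (simp add: ennreal_leI add_increasing2)
      next
        case False
        have "norm z < 1" using zs spmu by (simp add: unit_disc_def)
        then obtain k where zk: "z \<in> HL_set k" using HL_set_cover by blast
        have "xA < A * norm (f z) / 64" using False by linarith
        then have Pk: "P k" unfolding P_def using zk by blast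
        note pk = PB[OF Pk]
        have "z \<in> HL_box (bn k) (bj k)" using zk by (simp add: HL_set_eq)
        then have zW: "z \<in> W k" using box_in_window[of "bn k" "bj k"] pk by (auto simp: W_def)
        have "\<Psi>2 (A * norm (f z) / 64) \<le> \<Psi>2 (A * s k / 64)"
          using pk zk A by (intro orlicz_mono[OF o2]) (auto simp: field_simps)
        then have "ennreal (\<Psi>2 (A * norm (f z) / 64)) \<le> T k z"
          using Pk zW by (simp add: T_def ennreal_leI)
        also have "\<dots> \<le> (\<Sum>k. T k z)" by (rule ennreal_le_suminf_term)
        finally show ?thesis using zE by (simp add: add_increasing)
      qed
    qed
  qed
  have Tm: "T k \<in> borel_measurable \<mu>" for k
    unfolding T_def using Wm by measurable
  have step2: "(\<integral>\<^sup>+ z. ennreal (\<Psi>2 xA) * indicator E z + (\<Sum>k. T k z) \<partial>\<mu>)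
      = emeasure \<mu> E * ennreal (\<Psi>2 xA) + (\<Sum>k. \<integral>\<^sup>+ z. T k z \<partial>\<mu>)"
  proof -
    have "(\<integral>\<^sup>+ z. ennreal (\<Psi>2 xA) * indicator E z + (\<Sum>k. T k z) \<partial>\<mu>)
        = (\<integral>\<^sup>+ z. ennreal (\<Psi>2 xA) * indicator E z \<partial>\<mu>) + (\<integral>\<^sup>+ z. (\<Sum>k. T k z) \<partial>\<mu>)"
      by (rule nn_integral_add) (use E Tm in measurable)
    also have "(\<integral>\<^sup>+ z. ennreal (\<Psi>2 xA) * indicator E z \<partial>\<mu>) = emeasure \<mu> E * ennreal (\<Psi>2 xA)"
      using E by (simp add: nn_integral_cmult_indicator mult.commute)
    also have "(\<integral>\<^sup>+ z. (\<Sum>k. T k z) \<partial>\<mu>) = (\<Sum>k. \<integral>\<^sup>+ z. T k z \<partial>\<mu>)"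
      by (rule nn_integral_suminf) (rule Tm)
    finally show ?thesis .
  qed
  have Um: "U k \<in> borel_measurable area_D" for k
    unfolding U_def using Rm by measurable
  have step3: "(\<integral>\<^sup>+ z. T k z \<partial>\<mu>) \<le> ennreal (1/8) * (\<integral>\<^sup>+ z. U k z \<partial>area_D)" for k
  proof (cases "P k")
    case False then show ?thesis by (simp add: T_def U_def)
  next
    case True
    have "(\<integral>\<^sup>+ z. T k z \<partial>\<mu>) = ennreal (\<Psi>2 (A * s k / 64)) * emeasure \<mu> (W k)"
      using True by (simp add: T_def nn_integral_cmult_indicator[OF Wm])
    also have "\<dots> = emeasure \<mu> (W k) * ennreal (\<Psi>2 (A * s k / 64))" by (rule mult.commute)
    also have "\<dots> \<le> ennreal (1/8) * (ennreal (\<Psi>1 (s k)) * emeasure area_D (R k))"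
      using PB[OF True] by blast
    also have "ennreal (\<Psi>1 (s k)) * emeasure area_D (R k) = (\<integral>\<^sup>+ z. U k z \<partial>area_D)"
      using Rm True by (simp add: U_def nn_integral_cmult_indicator)
    finally show ?thesis .
  qed
  have step4: "(\<Sum>k. \<integral>\<^sup>+ z. T k z \<partial>\<mu>) \<le> ennreal (1/8) * (\<integral>\<^sup>+ z. ennreal (\<Psi>1 (Lambda_f f z)) \<partial>area_D)"
  proof -
    have "(\<Sum>k. \<integral>\<^sup>+ z. T k z \<partial>\<mu>) \<le> (\<Sum>k. ennreal (1/8) * (\<integral>\<^sup>+ z. U k z \<partial>area_D))"
      by (intro suminf_le step3) (auto intro: summableI)
    also have "\<dots> = ennreal (1/8) * (\<Sum>k. \<integral>\<^sup>+ z. U k z \<partial>area_D)"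
      by (rule ennreal_suminf_cmult)
    also have "(\<Sum>k. \<integral>\<^sup>+ z. U k z \<partial>area_D) = (\<integral>\<^sup>+ z. (\<Sum>k. U k z) \<partial>area_D)"
      by (rule nn_integral_suminf[symmetric]) (rule Um)
    also have "\<dots> \<le> (\<integral>\<^sup>+ z. ennreal (\<Psi>1 (Lambda_f f z)) \<partial>area_D)"
    proof (rule nn_integral_mono)
      fix z
      show "(\<Sum>k. U k z) \<le> ennreal (\<Psi>1 (Lambda_f f z))"
      proof (cases "\<exists>k0. z \<in> HL_set k0")
        case False
        then have "\<And>k. U k z = 0" using RH by (auto simp: U_def split: split_indicator)
        then show ?thesis by simp
      next
        case True
        then obtain k0 where k0: "z \<in> HL_set k0" by blast
        have "(\<Sum>k. U k z) = (\<Sum>k\<in>{k0}. U k z)"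
        proof (rule suminf_finite)
          fix k assume "k \<notin> {k0}"
          then have "z \<notin> R k" using RH HL_set_disj[OF k0] by blast
          then show "U k z = 0" by (simp add: U_def)
        qed simp
        also have "\<dots> = U k0 z" by simp
        also have "\<dots> \<le> ennreal (\<Psi>1 (s k0))" by (simp add: U_def split: split_indicator)
        also have "\<dots> = ennreal (\<Psi>1 (Lambda_f f z))" using Lambda_f_eq[OF k0] by (simp add: s_def)
        finally show ?thesis .
      qed
    qed
    finally show ?thesis by (simp add: mult_left_mono)
  qed
  show "(\<integral>\<^sup>+ z\<in>E. ennreal (\<Psi>2 (A * norm (f z) / 64)) \<partial>\<mu>)
                \<le> emeasure \<mu> E * ennreal (\<Psi>2 ((A / 8) * orlicz_inv \<Psi>1 (4 / hA\<^sup>2)))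
                  + ennreal (1/8) * (\<integral>\<^sup>+ z. ennreal (\<Psi>1 (Lambda_f f z)) \<partial>area_D)"
    using step1 step2 step4 unfolding xA_def[symmetric]
    by (smt (verit) add_left_mono order_trans)
qed


end
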